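(* Let $0.8<t<1$, $P=(0,t)$, $Q=(0,-t)$, and let $-1<r'<\frac{t-1}{t+1}$, $R'=(r',0)$. Then $\rho(\psi_{\triangle PQR'})<\frac{2}{5}$.
   Context: $D$ is the open unit disk in $\mathbb R^2$, $S^1$ its boundary circle identified with $\mathbb R/\mathbb Z$ via the counterclockwise normalized angle. For a closed convex $U\subset D$ and $v\in S^1$, $\psi_U(v)$ is the point $w\in S^1\setminus\{v\}$ such that the line $vw$ meets $U$ and $U$ lies in the closed half-plane to the left of the directed line from $v$ to $w$; it is an orientation-preserving homeomorphism of $S^1$; $\triangle PQR'$ denotes the closed filled triangle. For such $f$, $\rho(f)=\lim_{n\to\infty}(\overline f^n(x)-x)/n$ with $\overline f$ the lift to $\mathbb R$ satisfying $\overline f(0)\in[0,1)$. *)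

theory Defs
  imports "HOL-Analysis.Analysis"
begin

text \<open>The plane R^2 is modelled by the complex numbers; D = ball 0 1, S^1 = sphere 0 1.
  The angle coordinate x in R (mod Z) corresponds to the point cis (2 pi x).\<close>

definition circ_pt :: "real \<Rightarrow> complex" where
  "circ_pt x = cis (2 * pi * x)"

text \<open>Signed cross product (w - v) x (z - v): nonnegative iff z lies in the closed
  half-plane to the left of the directed line from v to w; zero iff z is on the line vw.\<close>
definition cross3 :: "complex \<Rightarrow> complex \<Rightarrow> complex \<Rightarrow> real" where
  "cross3 v w z = Im (cnj (w - v) * (z - v))"

definition psi :: "complex set \<Rightarrow> complex \<Rightarrow> complex" where
  "psi U v = (THE w. w \<in> sphere 0 1 \<and> w \<noteq> v \<and> (\<exists>z\<in>U. cross3 v w z = 0)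
                    \<and> (\<forall>z\<in>U. cross3 v w z \<ge> 0))"

definition circle_lift :: "(complex \<Rightarrow> complex) \<Rightarrow> real \<Rightarrow> real" where
  "circle_lift f = (THE F. continuous_on UNIV F \<and> (\<forall>x. circ_pt (F x) = f (circ_pt x))
                          \<and> 0 \<le> F 0 \<and> F 0 < 1)"

definition rot_num :: "(complex \<Rightarrow> complex) \<Rightarrow> real" where
  "rot_num f = (THE \<rho>. \<forall>x. (\<lambda>n. (((circle_lift f) ^^ n) x - x) / real n) \<longlonglongrightarrow> \<rho>)"

end

theory Submission
  imports Defs
begin

lemma circ_pt_norm [simp]: "norm (circ_pt x) = 1"
  by (simp add: circ_pt_def)

lemma circ_pt_nz [simp]: "circ_pt x \<noteq> 0"
  by (simp add: circ_pt_def)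

lemma circ_pt_add_int: "k \<in> \<int> \<Longrightarrow> circ_pt (x + k) = circ_pt x"
proof -
  assume "k \<in> \<int>"
  have "circ_pt (x + k) = cis (2*pi*x) * cis (2*pi*k)"
    by (simp add: circ_pt_def cis_mult distrib_left)
  also have "cis (2*pi*k) = 1" using \<open>k \<in> \<int>\<close> by simp
  finally show ?thesis by (simp add: circ_pt_def)
qed

lemma circ_pt_add1 [simp]: "circ_pt (x + 1) = circ_pt x"
  using circ_pt_add_int[of 1 x] by simp

lemma circ_pt_mult_cnj: "circ_pt a * cnj (circ_pt b) = circ_pt (a - b)"
  by (simp add: circ_pt_def cis_cnj cis_mult right_diff_distrib)

lemma Im_circ_pt: "Im (circ_pt a) = sin (2*pi*a)"
  by (simp add: circ_pt_def)

lemma Re_circ_pt: "Re (circ_pt a) = cos (2*pi*a)"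
  by (simp add: circ_pt_def)

lemma circ_pt_eq_imp_Ints:
  assumes "circ_pt a = circ_pt b" shows "a - b \<in> \<int>"
proof -
  have "circ_pt (a - b) = 1" using assms circ_pt_mult_cnj[of a b]
    by (metis circ_pt_norm complex_norm_square mult.commute norm_one of_real_1 power_one)
  then have "cos (2*pi*(a-b)) = 1" by (metis Re_circ_pt one_complex.simps(1))
  then obtain n::int where "2*pi*(a-b) = real_of_int n*2*pi" using cos_one_2pi_int by metis
  then have "2*pi*(a-b) = 2*pi*n" by simp
  then have "a - b = n" using pi_gt_zero by (metis mult_cancel_left pi_neq_zero zero_neq_numeral mult_eq_0_iff)
  then show ?thesis by simp
qed

lemma cis_double_arctan:
  "cis (2 * arctan q) = (1 + \<i> * q) / (1 - \<i> * q)"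
proof -
  have s: "sqrt (1 + q\<^sup>2) > 0" by (simp add: add_pos_nonneg)
  have ss: "(sqrt (1 + q\<^sup>2))\<^sup>2 = 1 + q\<^sup>2" by (simp add: add_nonneg_nonneg)
  have c: "cis (arctan q) = (1 + \<i> * q) / sqrt (1 + q\<^sup>2)"
    by (simp add: complex_eq_iff cos_arctan sin_arctan)
  have "cis (2 * arctan q) = (cis (arctan q))^2"
    by (simp only: power2_eq_square cis_mult mult_2)
  also have "\<dots> = (1 + \<i> * q)^2 / (1 + q\<^sup>2)"
  proof -
    have "(complex_of_real (sqrt (1 + q\<^sup>2)))\<^sup>2 = 1 + (complex_of_real q)\<^sup>2"
      by (metis ss of_real_add of_real_1 of_real_power)
    then show ?thesis by (simp add: c power_divide)
  qed
  also have "\<dots> = (1 + \<i> * q) / (1 - \<i> * q)"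
  proof -
    have nz: "1 - \<i> * complex_of_real q \<noteq> 0"
      by (simp add: complex_eq_iff)
    have "(1 + \<i> * q)^2 * (1 - \<i> * q) = (1 + \<i> * q) * (1 + q\<^sup>2)"
      by (simp add: algebra_simps power2_eq_square)
    moreover have "complex_of_real (1 + q\<^sup>2) \<noteq> 0"
      by (metis add_pos_nonneg less_numeral_extra(1) of_real_eq_0_iff order_less_irrefl zero_le_power2)
    ultimately show ?thesis using nz
      by (simp add: field_simps)
  qed
  finally show ?thesis .
qed

definition uu :: "complex \<Rightarrow> real \<Rightarrow> complex" where
  "uu z x = 1 - z * cnj (circ_pt x)"
definition qq :: "complex \<Rightarrow> real \<Rightarrow> real" where
  "qq z x = Im (uu z x) / Re (uu z x)"
definition Gz :: "complex \<Rightarrow> real \<Rightarrow> real" where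
  "Gz z x = x + 1/2 + arctan (qq z x) / pi"
definition sig :: "complex \<Rightarrow> complex \<Rightarrow> complex" where
  "sig z v = (z - v) / (1 - cnj z * v)"
definition Wm :: "complex \<Rightarrow> real \<Rightarrow> complex" where
  "Wm v m = - v * ((1 + \<i> * m) / (1 - \<i> * m))"

lemma Re_uu_pos: assumes "norm z < 1" shows "Re (uu z x) > 0"
proof -
  have "Re (z * cnj (circ_pt x)) \<le> cmod (z * cnj (circ_pt x))" by (rule complex_Re_le_cmod)
  also have "\<dots> = norm z" by (simp add: norm_mult)
  finally show ?thesis using assms by (simp add: uu_def)
qed

lemma cis_add_pi_mid: "cis (a + pi + b) = - cis (a + b)"
proof -
  have "a + pi + b = (a + b) + pi" by simp
  then have "cis (a + pi + b) = cis ((a + b) + pi)" by (rule arg_cong)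
  also have "\<dots> = - cis (a + b)" by (rule minus_cis[symmetric])
  finally show ?thesis .
qed

lemma circ_pt_shift: "circ_pt (x + 1/2 + arctan m / pi) = Wm (circ_pt x) m"
proof -
  have "2*pi*(x + 1/2 + arctan m / pi) = 2*pi*x + pi + 2 * arctan m"
    by (simp add: field_simps)
  then have "circ_pt (x + 1/2 + arctan m / pi) = - cis (2*pi*x + 2 * arctan m)"
    unfolding circ_pt_def by (simp only: cis_add_pi_mid)
  also have "\<dots> = - cis (2*pi*x) * cis (2 * arctan m)" by (simp add: cis_mult)
  finally show ?thesis by (simp add: Wm_def cis_double_arctan circ_pt_def)
qed

lemma uu_periodic: "k \<in> \<int> \<Longrightarrow> uu z (x + k) = uu z x"
  by (simp add: uu_def circ_pt_add_int)

lemma qq_periodic: "k \<in> \<int> \<Longrightarrow> qq z (x + k) = qq z x"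
  by (simp add: qq_def uu_periodic)

lemma Gz_periodic: "k \<in> \<int> \<Longrightarrow> Gz z (x + k) = Gz z x + k"
  by (simp add: Gz_def qq_periodic)

lemma Gz_periodic1: "Gz z (x + 1) = Gz z x + 1"
  using Gz_periodic[of 1] by simp

lemma arctan_div_pi_bounds: "- 1/2 < arctan m / pi" "arctan m / pi < 1/2"
  using arctan_bounded[of m] pi_gt_zero by (auto simp: field_simps)

lemma Gz_bounds: "x < Gz z x" "Gz z x < x + 1"
  using arctan_div_pi_bounds[of "qq z x"] unfolding Gz_def by linarith+

lemma norm_unit_cnj: "norm v = 1 \<Longrightarrow> v * cnj v = 1"
  by (metis complex_norm_square mult.commute of_real_1 power_one)

lemma sig_denom_nz: assumes "norm z < 1" "norm v = 1" shows "1 - cnj z * v \<noteq> 0"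
proof
  assume "1 - cnj z * v = 0"
  then have "cnj z * v = 1" by simp
  then have "norm (cnj z * v) = 1" by simp
  then show False using assms by (simp add: norm_mult)
qed

lemma Wm_eq_sig:
  assumes "norm z < 1"
  shows "Wm (circ_pt x) (qq z x) = sig z (circ_pt x)"
proof -
  define v where "v = circ_pt x"
  define u where "u = uu z x"
  have Rp: "Re u > 0" using Re_uu_pos[OF assms] by (simp add: u_def)
  have vv: "v * cnj v = 1" by (simp add: v_def norm_unit_cnj)
  have cu: "cnj u = 1 - cnj z * v" by (simp add: u_def uu_def v_def)
  have d: "1 - cnj z * v \<noteq> 0" using sig_denom_nz[OF assms, of v] by (simp add: v_def)
  have q: "(1 + \<i> * (Im u / Re u)) / (1 - \<i> * (Im u / Re u)) = u / cnj u"
  proof -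
    have r: "complex_of_real (Re u) \<noteq> 0" using Rp by simp
    have "1 + \<i> * (Im u / Re u) = u / Re u"
      using r by (simp add: complex_eq_iff field_simps)
    moreover have "1 - \<i> * (Im u / Re u) = cnj u / Re u"
      using r by (simp add: complex_eq_iff field_simps)
    ultimately show ?thesis using r by simp
  qed
  have "Wm v (qq z x) = - v * ((1 + \<i> * (Im u / Re u)) / (1 - \<i> * (Im u / Re u)))"
    unfolding Wm_def qq_def u_def by (rule refl)
  also have "\<dots> = - v * (u / cnj u)" by (simp only: q)
  also have "\<dots> = (- v * u) / (1 - cnj z * v)" by (simp add: cu)
  also have "- v * u = z - v"
  proof -
    have "- v * u = - v + z * (v * cnj v)" by (simp add: u_def uu_def v_def algebra_simps)
    then show ?thesis using vv by simp
  qed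
  finally show ?thesis by (simp add: sig_def v_def)
qed

lemma circ_Gz: "norm z < 1 \<Longrightarrow> circ_pt (Gz z x) = sig z (circ_pt x)"
  by (simp add: Gz_def circ_pt_shift Wm_eq_sig)

lemma sig_norm: assumes "norm z < 1" "norm v = 1" shows "norm (sig z v) = 1"
proof -
  have d: "1 - cnj z * v \<noteq> 0" using sig_denom_nz[OF assms] .
  have vv: "v * cnj v = 1" using assms(2) norm_unit_cnj by blast
  have "z - v = - v * (1 - z * cnj v)" using vv by (simp add: algebra_simps)
  then have "norm (z - v) = norm (1 - z * cnj v)" using assms(2) by (simp add: norm_mult)
  also have "\<dots> = norm (cnj (1 - z * cnj v))" by (rule complex_mod_cnj[symmetric])
  also have "cnj (1 - z * cnj v) = 1 - cnj z * v" by simp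
  finally show ?thesis using d by (simp add: sig_def norm_divide)
qed

lemma sig_sig: assumes "norm z < 1" "norm v = 1" shows "sig z (sig z v) = v"
proof -
  have d: "1 - cnj z * v \<noteq> 0" using sig_denom_nz[OF assms] .
  have zz: "z * cnj z \<noteq> 1"
  proof
    assume "z * cnj z = 1" then have "norm (z * cnj z) = 1" by simp
    moreover have "norm z * norm z < 1 * 1" by (rule mult_strict_mono') (use assms(1) in auto)
    ultimately show False by (simp add: norm_mult)
  qed
  have e: "1 - cnj z * ((z - v) / (1 - cnj z * v)) = (1 - z * cnj z) / (1 - cnj z * v)"
    using d by (simp add: field_simps)
  have e2: "z - (z - v) / (1 - cnj z * v) = v * (1 - z * cnj z) / (1 - cnj z * v)"
    using d by (simp add: field_simps)
  have nz: "1 - z * cnj z \<noteq> 0" using zz by simp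
  have "sig z (sig z v) = (v * (1 - z * cnj z) / (1 - cnj z * v)) / ((1 - z * cnj z) / (1 - cnj z * v))"
    unfolding sig_def e e2 ..
  also have "\<dots> = v" using nz d by simp
  finally show ?thesis .
qed

lemma Gz_cont: assumes "norm z < 1" shows "continuous_on UNIV (Gz z)"
proof -
  have cu: "continuous_on UNIV (uu z)" unfolding uu_def circ_pt_def
    by (intro continuous_intros)
  have cR: "continuous_on UNIV (\<lambda>x. Re (uu z x))" using cu by (intro continuous_intros)
  have cI: "continuous_on UNIV (\<lambda>x. Im (uu z x))" using cu by (intro continuous_intros)
  have nz: "\<forall>x\<in>UNIV. Re (uu z x) \<noteq> 0" using Re_uu_pos[OF assms] by (metis less_irrefl)
  have "continuous_on UNIV (qq z)" unfolding qq_def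
    by (rule continuous_on_divide[OF cI cR nz])
  then show ?thesis unfolding Gz_def
    by (intro continuous_intros) auto
qed

lemma strict_mono_lift:
  fixes f :: "real \<Rightarrow> real"
  assumes c: "continuous_on UNIV f" and i: "inj f" and p: "\<And>x. f (x + 1) = f x + 1"
  shows "strict_mono f"
proof (rule strict_monoI)
  fix a b :: real assume ab: "a < b"
  show "f a < f b"
  proof (rule ccontr)
    assume "\<not> f a < f b"
    then have "f b < f a" using i ab by (metis inj_eq linorder_neqE_linordered_idom order_less_irrefl)
    have "(f a < f b \<and> f b < f (b+1)) \<or> (f (b+1) < f b \<and> f b < f a)"
      by (rule continuous_inj_imp_mono) (use ab c i in \<open>auto intro: continuous_on_subset inj_on_subset\<close>)
    then show False using \<open>f b < f a\<close> p[of b] by auto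
  qed
qed

lemma Gz_inj: assumes "norm z < 1" shows "inj (Gz z)"
proof (rule injI)
  fix x y assume e: "Gz z x = Gz z y"
  have "sig z (circ_pt x) = sig z (circ_pt y)" using e circ_Gz[OF assms] by metis
  then have "circ_pt x = circ_pt y" using sig_sig[OF assms] by (metis circ_pt_norm)
  then have "x - y \<in> \<int>" by (rule circ_pt_eq_imp_Ints)
  then obtain k where k: "x = y + of_int k" by (metis Ints_cases add.commute diff_add_cancel)
  then have "Gz z x = Gz z y + of_int k" using Gz_periodic[where k="of_int k" and z=z and x=y] by simp
  then have "k = 0" using e by simp
  then show "x = y" using k by simp
qed

lemma Gz_strict_mono: "norm z < 1 \<Longrightarrow> strict_mono (Gz z)"
  by (rule strict_mono_lift) (auto simp: Gz_cont Gz_inj Gz_periodic1)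

lemma Gz_Gz: assumes "norm z < 1" shows "Gz z (Gz z x) = x + 1"
proof -
  have "circ_pt (Gz z (Gz z x)) = circ_pt x"
    using circ_Gz[OF assms] sig_sig[OF assms] by simp
  then have "Gz z (Gz z x) - x \<in> \<int>" by (rule circ_pt_eq_imp_Ints)
  then obtain k where k: "Gz z (Gz z x) - x = of_int k" by (metis Ints_cases)
  have "x < Gz z (Gz z x)" "Gz z (Gz z x) < x + 2"
    using Gz_bounds[where x=x and z=z] Gz_bounds[where x="Gz z x" and z=z] by auto
  then have "0 < real_of_int k" "real_of_int k < 2" using k by linarith+
  then have "0 < k" "k < 2" by simp_all
  then have "k = 1" by simp
  then show ?thesis using k by simp
qed

lemma one_minus_im_nz: "1 - \<i> * complex_of_real m \<noteq> 0"
  by (simp add: complex_eq_iff)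
lemma one_plus_im_nz: "1 + \<i> * complex_of_real m \<noteq> 0"
  by (simp add: complex_eq_iff)

lemma Wm_minus: "Wm v m - v = - v * (2 / (1 - \<i> * m))"
proof -
  have "(1 + \<i> * complex_of_real m) / (1 - \<i> * m) + 1 = 2 / (1 - \<i> * m)"
    using one_minus_im_nz[of m] by (simp add: field_simps)
  moreover have "Wm v m - v = - v * ((1 + \<i> * complex_of_real m) / (1 - \<i> * m) + 1)"
    unfolding Wm_def by (simp add: distrib_left)
  ultimately show ?thesis by simp
qed

lemma cross3_Wm:
  assumes "norm v = 1"
  shows "cross3 v (Wm v m) z = 2 * (Im (1 - z * cnj v) - m * Re (1 - z * cnj v)) / (1 + m\<^sup>2)"
proof -
  have vv: "cnj v * v = 1" using norm_unit_cnj[OF assms] by (simp add: mult.commute)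
  have "cnj (Wm v m - v) * (z - v) = - cnj v * (2 / (1 + \<i> * m)) * (z - v)"
    unfolding Wm_minus by simp
  also have "\<dots> = 2 * (1 - z * cnj v) / (1 + \<i> * m)"
  proof -
    have "- cnj v * (z - v) = 1 - z * cnj v" using vv by (simp add: algebra_simps)
    then show ?thesis by (metis (no_types, lifting) mult.commute times_divide_eq_left times_divide_eq_right mult.assoc)
  qed
  also have "\<dots> = 2 * (1 - z * cnj v) * (1 - \<i> * m) / (1 + m\<^sup>2)"
  proof -
    have "(1 + \<i> * complex_of_real m) * (1 - \<i> * m) = 1 + (complex_of_real m)\<^sup>2"
      by (simp add: algebra_simps power2_eq_square)
    moreover have "1 + (complex_of_real m)\<^sup>2 \<noteq> 0"
      by (metis of_real_1 of_real_add of_real_eq_0_iff of_real_power power2_less_eq_zero_iff add_pos_nonneg zero_less_one zero_le_power2 less_irrefl)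
    ultimately show ?thesis using one_plus_im_nz[of m] by (simp add: field_simps power2_eq_square)
  qed
  finally have e: "cnj (Wm v m - v) * (z - v) = 2 * (1 - z * cnj v) * (1 - \<i> * m) / (1 + m\<^sup>2)" .
  define u where "u = 1 - z * cnj v"
  have "Im (2 * u * (1 - \<i> * m) / (1 + (complex_of_real m)\<^sup>2)) = 2 * (Im u - m * Re u) / (1 + m\<^sup>2)"
  proof -
    have "2 * u * (1 - \<i> * m) / (1 + (complex_of_real m)\<^sup>2) = complex_of_real (1 / (1 + m\<^sup>2)) * (2 * u * (1 - \<i> * m))"
      by (simp add: field_simps)
    then show ?thesis by (simp add: algebra_simps)
  qed
  then show ?thesis unfolding cross3_def e u_def by simp
qed

lemma Wm_norm: "norm v = 1 \<Longrightarrow> norm (Wm v m) = 1"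
proof -
  assume "norm v = 1"
  have "norm (1 + \<i> * complex_of_real m) = norm (1 - \<i> * complex_of_real m)"
    by (simp add: cmod_def)
  then show ?thesis using \<open>norm v = 1\<close> one_minus_im_nz[of m] by (simp add: Wm_def norm_mult norm_divide)
qed

lemma Wm_neq: "norm v = 1 \<Longrightarrow> Wm v m \<noteq> v"
proof
  assume v: "norm v = 1" and e: "Wm v m = v"
  have "Wm v m - v = 0" using e by simp
  then have "- v * (2 / (1 - \<i> * m)) = 0" by (simp add: Wm_minus)
  then show False using v one_minus_im_nz[of m] by auto
qed

lemma Wm_surj:
  assumes v: "norm v = 1" and w: "norm w = 1" and ne: "w \<noteq> v"
  shows "\<exists>m. w = Wm v m"
proof -
  define \<zeta> where "\<zeta> = - w * cnj v"
  have vv: "v * cnj v = 1" using norm_unit_cnj[OF v] .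
  have nz: "norm \<zeta> = 1" using v w by (simp add: \<zeta>_def norm_mult)
  have c2: "(Re \<zeta>)\<^sup>2 + (Im \<zeta>)\<^sup>2 = 1" using nz by (simp add: cmod_def)
  have "\<zeta> \<noteq> -1"
  proof
    assume "\<zeta> = -1" then have "w * cnj v = 1" by (simp add: \<zeta>_def)
    have "w = w * (v * cnj v)" using vv by simp
    also have "\<dots> = (w * cnj v) * v" by (simp add: ac_simps)
    finally have "w = v" using \<open>w * cnj v = 1\<close> by simp
    then show False using ne by simp
  qed
  then have c: "1 + Re \<zeta> \<noteq> 0"
  proof -
    assume "\<zeta> \<noteq> -1"
    show "1 + Re \<zeta> \<noteq> 0"
    proof
      assume "1 + Re \<zeta> = 0" then have "Re \<zeta> = -1" by simp
      then have "Im \<zeta> = 0" using c2 by (simp add: power2_eq_square)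
      then show False using \<open>Re \<zeta> = -1\<close> \<open>\<zeta> \<noteq> -1\<close> by (simp add: complex_eq_iff)
    qed
  qed
  define m where "m = Im \<zeta> / (1 + Re \<zeta>)"
  have key: "(1 + \<i> * complex_of_real m) / (1 - \<i> * m) = \<zeta>"
  proof -
    have "1 + \<i> * complex_of_real m = \<zeta> * (1 - \<i> * m)"
    proof -
      have "Re (\<zeta> * (1 - \<i> * m)) = 1" unfolding m_def using c c2
        by (simp add: field_simps power2_eq_square)
      moreover have "Im (\<zeta> * (1 - \<i> * m)) = m" unfolding m_def using c
        by (simp add: field_simps)
      ultimately show ?thesis by (simp add: complex_eq_iff)
    qed
    then show ?thesis using one_minus_im_nz[of m] by (simp add: field_simps)
  qed
  have "Wm v m = - v * \<zeta>" by (simp add: Wm_def key)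
  also have "\<dots> = w" using vv by (simp add: \<zeta>_def algebra_simps)
  finally show ?thesis by metis
qed

definition F3 :: "complex \<Rightarrow> complex \<Rightarrow> complex \<Rightarrow> real \<Rightarrow> real" where
  "F3 a b c x = min (Gz a x) (min (Gz b x) (Gz c x))"

lemma F3_alt: "F3 a b c x = x + 1/2 + arctan (min (qq a x) (min (qq b x) (qq c x))) / pi"
proof -
  have m: "\<And>p q. arctan (min p q) = min (arctan p) (arctan q)"
    by (simp add: min_def arctan_le_iff)
  have d: "\<And>p q. min p q / pi = min (p/pi) (q/pi)"
  proof -
    fix p q :: real
    have "p \<le> q \<longleftrightarrow> p/pi \<le> q/pi" using pi_gt_zero by (simp add: divide_le_cancel)
    then show "min p q / pi = min (p/pi) (q/pi)" by (simp add: min_def)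
  qed
  show ?thesis unfolding F3_def Gz_def m d by (simp add: min_add_distrib_left)
qed

lemma Im_uu: "norm z < 1 \<Longrightarrow> Im (uu z x) = qq z x * Re (uu z x)"
  using Re_uu_pos[of z x] by (simp add: qq_def)

lemma uu_comb:
  "1 - (complex_of_real \<alpha> * a + complex_of_real \<beta> * b + complex_of_real \<gamma> * c) * w
   = complex_of_real \<alpha> * (1 - a * w) + complex_of_real \<beta> * (1 - b * w) + complex_of_real \<gamma> * (1 - c * w)"
  if "\<alpha> + \<beta> + \<gamma> = 1" for w :: complex
proof -
  have "complex_of_real \<alpha> + complex_of_real \<beta> + complex_of_real \<gamma> = 1"
    using that by (metis of_real_1 of_real_add)
  then show ?thesis by (simp add: algebra_simps)
qed

lemma psi_tri:
  assumes a: "norm a < 1" and b: "norm b < 1" and c: "norm c < 1"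
  shows "psi (convex hull {a,b,c}) (circ_pt x) = circ_pt (F3 a b c x)"
proof -
  define v where "v = circ_pt x"
  have v1: "norm v = 1" by (simp add: v_def)
  define m where "m = min (qq a x) (min (qq b x) (qq c x))"
  have wdef: "circ_pt (F3 a b c x) = Wm v m"
    unfolding F3_alt circ_pt_shift m_def v_def ..
  define E where "E \<mu> z = Im (1 - z * cnj v) - \<mu> * Re (1 - z * cnj v)" for \<mu> z
  have uuv: "\<And>z. uu z x = 1 - z * cnj v" by (simp add: uu_def v_def)
  have cr: "\<And>\<mu> z. cross3 v (Wm v \<mu>) z = 2 * E \<mu> z / (1 + \<mu>\<^sup>2)"
    using cross3_Wm[OF v1] by (simp add: E_def)
  have pos: "\<And>\<mu>::real. 1 + \<mu>\<^sup>2 > 0" by (metis add_pos_nonneg zero_le_power2 zero_less_one)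
  have crs: "\<And>\<mu> z. (cross3 v (Wm v \<mu>) z \<ge> 0) = (E \<mu> z \<ge> 0)" "\<And>\<mu> z. (cross3 v (Wm v \<mu>) z = 0) = (E \<mu> z = 0)"
    using pos by (auto simp: cr zero_le_divide_iff) (metis less_le_not_le pos)+
  have Ev: "\<And>\<mu> z. norm z < 1 \<Longrightarrow> E \<mu> z = (qq z x - \<mu>) * Re (uu z x)"
    unfolding E_def uuv[symmetric] using Im_uu by (simp add: algebra_simps)
  have Eab: "E \<mu> a \<ge> 0 \<and> E \<mu> b \<ge> 0 \<and> E \<mu> c \<ge> 0 \<longleftrightarrow> \<mu> \<le> m" for \<mu>
    using Ev[OF a, of \<mu>] Ev[OF b, of \<mu>] Ev[OF c, of \<mu>] Re_uu_pos[OF a, of x] Re_uu_pos[OF b, of x] Re_uu_pos[OF c, of x]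
    by (auto simp: m_def zero_le_mult_iff)
  have Ecomb: "E \<mu> (complex_of_real \<alpha> * a + complex_of_real \<beta> * b + complex_of_real \<gamma> * c)
      = \<alpha> * E \<mu> a + \<beta> * E \<mu> b + \<gamma> * E \<mu> c" if "\<alpha> + \<beta> + \<gamma> = 1" for \<mu> \<alpha> \<beta> \<gamma>
    unfolding E_def uu_comb[OF that] by (simp add: algebra_simps)
  have hull: "convex hull {a,b,c} = {complex_of_real \<alpha> * a + complex_of_real \<beta> * b + complex_of_real \<gamma> * c | \<alpha> \<beta> \<gamma>. 0 \<le> \<alpha> \<and> 0 \<le> \<beta> \<and> 0 \<le> \<gamma> \<and> \<alpha> + \<beta> + \<gamma> = 1}"
    by (simp add: convex_hull_3 scaleR_conv_of_real)
  have vert: "a \<in> convex hull {a,b,c}" "b \<in> convex hull {a,b,c}" "c \<in> convex hull {a,b,c}"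
    by (auto intro: hull_inc)
  let ?P = "\<lambda>w. w \<in> sphere 0 1 \<and> w \<noteq> v \<and> (\<exists>z\<in>convex hull {a,b,c}. cross3 v w z = 0)
                    \<and> (\<forall>z\<in>convex hull {a,b,c}. cross3 v w z \<ge> 0)"
  have allpos: "(\<forall>z\<in>convex hull {a,b,c}. E \<mu> z \<ge> 0) \<longleftrightarrow> \<mu> \<le> m" for \<mu>
  proof
    assume "\<forall>z\<in>convex hull {a,b,c}. E \<mu> z \<ge> 0"
    then show "\<mu> \<le> m" using vert Eab by blast
  next
    assume "\<mu> \<le> m"
    then have "E \<mu> a \<ge> 0" "E \<mu> b \<ge> 0" "E \<mu> c \<ge> 0" using Eab by auto
    then show "\<forall>z\<in>convex hull {a,b,c}. E \<mu> z \<ge> 0"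
      unfolding hull using Ecomb by (auto intro!: add_nonneg_nonneg mult_nonneg_nonneg)
  qed
  have ex0: "(\<exists>z\<in>convex hull {a,b,c}. E \<mu> z = 0) \<Longrightarrow> \<mu> \<le> m \<Longrightarrow> \<mu> = m" for \<mu>
  proof -
    assume ex: "\<exists>z\<in>convex hull {a,b,c}. E \<mu> z = 0" and le: "\<mu> \<le> m"
    then have ge: "E \<mu> a \<ge> 0" "E \<mu> b \<ge> 0" "E \<mu> c \<ge> 0" using Eab by auto
    from ex obtain \<alpha> \<beta> \<gamma> where abc: "0 \<le> \<alpha>" "0 \<le> \<beta>" "0 \<le> \<gamma>" "\<alpha> + \<beta> + \<gamma> = 1"
      and z0: "E \<mu> (complex_of_real \<alpha> * a + complex_of_real \<beta> * b + complex_of_real \<gamma> * c) = 0"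
      unfolding hull by blast
    have s0: "\<alpha> * E \<mu> a + \<beta> * E \<mu> b + \<gamma> * E \<mu> c = 0" using z0 Ecomb[OF abc(4)] by simp
    have t: "\<alpha> * E \<mu> a \<ge> 0" "\<beta> * E \<mu> b \<ge> 0" "\<gamma> * E \<mu> c \<ge> 0" using abc ge by auto
    have "(\<alpha> > 0 \<and> E \<mu> a = 0) \<or> (\<beta> > 0 \<and> E \<mu> b = 0) \<or> (\<gamma> > 0 \<and> E \<mu> c = 0)"
    proof -
      have "\<alpha> * E \<mu> a = 0" "\<beta> * E \<mu> b = 0" "\<gamma> * E \<mu> c = 0" using s0 t by linarith+
      moreover have "\<alpha> > 0 \<or> \<beta> > 0 \<or> \<gamma> > 0" using abc by linarith
      ultimately show ?thesis by auto
    qed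
    then have "\<mu> = qq a x \<or> \<mu> = qq b x \<or> \<mu> = qq c x"
      using Ev[OF a, of \<mu>] Ev[OF b, of \<mu>] Ev[OF c, of \<mu>] Re_uu_pos[OF a, of x] Re_uu_pos[OF b, of x] Re_uu_pos[OF c, of x]
      by auto
    then have "m \<le> \<mu>" by (auto simp: m_def)
    then show "\<mu> = m" using le by simp
  qed
  have Pw: "?P (Wm v m)"
  proof (intro conjI)
    show "Wm v m \<in> sphere 0 1" using Wm_norm[OF v1] by simp
    show "Wm v m \<noteq> v" using Wm_neq[OF v1] .
    show "\<forall>z\<in>convex hull {a,b,c}. cross3 v (Wm v m) z \<ge> 0" using allpos[of m] crs by simp
    have "m = qq a x \<or> m = qq b x \<or> m = qq c x" by (auto simp: m_def min_def)
    then have "E m a = 0 \<or> E m b = 0 \<or> E m c = 0" using Ev a b c by auto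
    then show "\<exists>z\<in>convex hull {a,b,c}. cross3 v (Wm v m) z = 0" using vert crs by blast
  qed
  have uniq: "w = Wm v m" if "?P w" for w
  proof -
    from that have w1: "norm w = 1" and ne: "w \<noteq> v" by auto
    obtain \<mu> where wm: "w = Wm v \<mu>" using Wm_surj[OF v1 w1 ne] by blast
    have "\<forall>z\<in>convex hull {a,b,c}. E \<mu> z \<ge> 0" using that crs wm by simp
    then have le: "\<mu> \<le> m" using allpos by blast
    have "\<exists>z\<in>convex hull {a,b,c}. E \<mu> z = 0" using that crs wm by simp
    then have "\<mu> = m" using ex0 le by blast
    then show ?thesis using wm by simp
  qed
  have "psi (convex hull {a,b,c}) v = Wm v m"
    unfolding psi_def
  proof (rule the_equality)
    show "?P (Wm v m)" by (rule Pw)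
  next
    fix w assume "?P w" then show "w = Wm v m" by (rule uniq)
  qed
  then show ?thesis using wdef by (simp add: v_def)
qed

lemma F3_bounds: "x < F3 a b c x" "F3 a b c x < x + 1"
  unfolding F3_def using Gz_bounds[where x=x] by (auto simp: min_def)

lemma F3_cont: "norm a < 1 \<Longrightarrow> norm b < 1 \<Longrightarrow> norm c < 1 \<Longrightarrow> continuous_on UNIV (F3 a b c)"
  unfolding F3_def[abs_def] by (intro continuous_on_min Gz_cont)

lemma F3_periodic1: "F3 a b c (x + 1) = F3 a b c x + 1"
  unfolding F3_def by (simp add: Gz_periodic1)

lemma F3_strict_mono:
  assumes "norm a < 1" "norm b < 1" "norm c < 1" shows "strict_mono (F3 a b c)"
proof (rule strict_monoI)
  fix x y :: real assume "x < y"
  then have "Gz a x < Gz a y" "Gz b x < Gz b y" "Gz c x < Gz c y"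
    using Gz_strict_mono assms by (auto dest: strict_monoD)
  then show "F3 a b c x < F3 a b c y" unfolding F3_def by linarith
qed

lemma lift_F3:
  assumes a: "norm a < 1" and b: "norm b < 1" and c: "norm c < 1"
  shows "circle_lift (psi (convex hull {a,b,c})) = F3 a b c"
proof -
  let ?P = "\<lambda>F. continuous_on UNIV F \<and> (\<forall>x. circ_pt (F x) = psi (convex hull {a,b,c}) (circ_pt x))
                          \<and> 0 \<le> F 0 \<and> F 0 < 1"
  have PF: "?P (F3 a b c)"
    using F3_cont[OF a b c] psi_tri[OF a b c] F3_bounds[where x=0 and a=a and b=b and c=c] by auto
  have uniq: "G = F3 a b c" if PG: "?P G" for G
  proof -
    define h where "h x = G x - F3 a b c x" for x
    have hc: "continuous_on UNIV h" unfolding h_def[abs_def]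
      using PG F3_cont[OF a b c] by (intro continuous_intros) auto
    have hi: "h x \<in> \<int>" for x
      unfolding h_def by (rule circ_pt_eq_imp_Ints) (use PG psi_tri[OF a b c] in auto)
    have "h constant_on UNIV"
    proof (rule continuous_discrete_range_constant[OF connected_UNIV hc])
      fix x :: real assume "x \<in> UNIV"
      show "\<exists>e>0. \<forall>y. y \<in> UNIV \<and> h y \<noteq> h x \<longrightarrow> e \<le> norm (h y - h x)"
      proof (intro exI[of _ 1] conjI allI impI)
        fix y assume "y \<in> UNIV \<and> h y \<noteq> h x"
        moreover obtain i j where "h y = of_int i" "h x = of_int j" using hi by (metis Ints_cases)
        ultimately show "1 \<le> norm (h y - h x)" by auto
      qed simp
    qed
    then have hx: "h x = h 0" for x by (auto simp: constant_on_def)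
    have "h 0 = 0"
    proof -
      obtain j where j: "h 0 = of_int j" using hi by (metis Ints_cases)
      have "-1 < h 0" "h 0 < 1" using PG F3_bounds[where x=0 and a=a and b=b and c=c] by (auto simp: h_def)
      then have "j = 0" using j by auto
      then show ?thesis using j by simp
    qed
    then show ?thesis using hx by (auto simp: h_def)
  qed
  show ?thesis unfolding circle_lift_def
  proof (rule the_equality)
    show "?P (F3 a b c)" by (rule PF)
  next
    fix G assume "?P G" then show "G = F3 a b c" by (rule uniq)
  qed
qed

locale liftmap =
  fixes f :: "real \<Rightarrow> real"
  assumes fmono: "mono f" and fper: "\<And>x. f (x + 1) = f x + 1"
begin

lemma iter_per1: "(f ^^ n) (x + 1) = (f ^^ n) x + 1"
  by (induction n) (auto simp: fper)

lemma iter_per_nat: "(f ^^ n) (x + real k) = (f ^^ n) x + real k"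
proof (induction k arbitrary: x)
  case 0 then show ?case by simp
next
  case (Suc k)
  have "(f ^^ n) (x + real (Suc k)) = (f ^^ n) ((x + real k) + 1)" by (simp add: add_ac)
  also have "\<dots> = (f ^^ n) x + real k + 1" using iter_per1 Suc by simp
  finally show ?case by simp
qed

lemma iter_per_int: "(f ^^ n) (x + real_of_int k) = (f ^^ n) x + real_of_int k"
proof (cases "k \<ge> 0")
  case True
  then show ?thesis using iter_per_nat[of n x "nat k"] by simp
next
  case False
  define j where "j = nat (- k)"
  have kj: "real_of_int k = - real j" using False by (simp add: j_def)
  have "(f ^^ n) (x + real_of_int k) + real j = (f ^^ n) (x + real_of_int k + real j)"
    by (rule iter_per_nat[symmetric])
  also have "\<dots> = (f ^^ n) x" using kj by simp
  finally show ?thesis using kj by simp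
qed

lemma iter_mono: "mono (f ^^ n)"
  by (induction n) (auto simp: mono_def fmono[THEN monoD])

definition D :: "nat \<Rightarrow> real \<Rightarrow> real" where "D n x = (f ^^ n) x - x"

lemma D_int: "D n (x + real_of_int k) = D n x"
  by (simp add: D_def iter_per_int)

lemma D_close: "\<bar>D n y - D n x\<bar> \<le> 1"
proof -
  define k where "k = \<lfloor>y - x\<rfloor>"
  define y' where "y' = y - real_of_int k"
  have fl: "real_of_int k \<le> y - x" "y - x < real_of_int k + 1"
    unfolding k_def by (rule of_int_floor_le, rule real_of_int_floor_add_one_gt)
  have y'r: "x \<le> y'" "y' \<le> x + 1" unfolding y'_def using fl by linarith+
  have "(f ^^ n) x \<le> (f ^^ n) y'" using iter_mono y'r(1) by (auto dest: monoD)
  moreover have "(f ^^ n) y' \<le> (f ^^ n) (x + 1)" using iter_mono y'r(2) by (auto dest: monoD)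
  ultimately have "\<bar>D n y' - D n x\<bar> \<le> 1" using y'r by (auto simp: D_def iter_per1)
  moreover have "D n y = D n y'" using D_int[of n y' k] by (simp add: y'_def)
  ultimately show ?thesis by simp
qed

definition a :: "nat \<Rightarrow> real" where "a n = (f ^^ n) 0"

lemma a_add: "\<bar>a (m + n) - a m - a n\<bar> \<le> 1"
proof -
  have "a (m + n) = D m ((f ^^ n) 0) + a n" by (simp add: a_def D_def funpow_add)
  moreover have "a m = D m 0" by (simp add: a_def D_def)
  ultimately show ?thesis using D_close[of m "(f ^^ n) 0" 0] by simp
qed

lemma a_mult: "\<bar>a (k * m) - real k * a m\<bar> \<le> real k"
proof (induction k)
  case 0 then show ?case by (simp add: a_def)
next
  case (Suc k)
  have "\<bar>a (m + k * m) - a m - a (k * m)\<bar> \<le> 1" by (rule a_add)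
  then show ?case using Suc by (simp add: algebra_simps abs_le_iff)
qed

lemma a_cauchy_est:
  assumes "n > 0" "m > 0"
  shows "\<bar>a n / n - a m / m\<bar> \<le> 1 / n + 1 / m"
proof -
  have e1: "\<bar>a (n * m) - real n * a m\<bar> \<le> real n" by (rule a_mult)
  have e2: "\<bar>a (m * n) - real m * a n\<bar> \<le> real m" by (rule a_mult)
  have nm: "real n > 0" "real m > 0" using assms by auto
  have "\<bar>a (n*m) / (real n * real m) - a m / m\<bar> \<le> 1 / m"
  proof -
    have "a (n*m) / (real n * real m) - a m / m = (a (n * m) - real n * a m) / (real n * real m)"
      using nm by (simp add: field_simps)
    then have "\<bar>a (n*m) / (real n * real m) - a m / m\<bar> = \<bar>a (n * m) - real n * a m\<bar> / (real n * real m)"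
      using nm by (simp add: abs_divide)
    also have "\<dots> \<le> real n / (real n * real m)" using e1 nm by (intro divide_right_mono) auto
    also have "\<dots> = 1 / m" using nm by simp
    finally show ?thesis .
  qed
  moreover have "\<bar>a (n*m) / (real n * real m) - a n / n\<bar> \<le> 1 / n"
  proof -
    have "a (n*m) / (real n * real m) - a n / n = (a (m * n) - real m * a n) / (real n * real m)"
      using nm by (simp add: field_simps mult.commute)
    then have "\<bar>a (n*m) / (real n * real m) - a n / n\<bar> = \<bar>a (m * n) - real m * a n\<bar> / (real n * real m)"
      using nm by (simp add: abs_divide)
    also have "\<dots> \<le> real m / (real n * real m)" using e2 nm by (intro divide_right_mono) auto
    also have "\<dots> = 1 / n" using nm by simp
    finally show ?thesis .
  qed
  ultimately show ?thesis by (smt (verit, best))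
qed

lemma a_convergent: "convergent (\<lambda>n. a n / real n)"
proof -
  have "Cauchy (\<lambda>n. a n / real n)"
  proof (rule metric_CauchyI)
    fix e :: real assume e: "e > 0"
    obtain M :: nat where M: "real M > 2 / e" using reals_Archimedean2 by blast
    have Mpos: "M > 0" using M e by (metis divide_pos_pos gr0I of_nat_0 order_less_asym zero_less_numeral)
    show "\<exists>M. \<forall>m\<ge>M. \<forall>n\<ge>M. dist (a m / real m) (a n / real n) < e"
    proof (intro exI[of _ M] allI impI)
      fix m n assume mn: "M \<le> m" "M \<le> n"
      then have pos: "m > 0" "n > 0" using Mpos by auto
      have "1 / real m \<le> 1 / real M" "1 / real n \<le> 1 / real M"
        using mn Mpos by (auto intro!: divide_left_mono)
      moreover have "2 / real M < e" using M e Mpos by (simp add: field_simps)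
      ultimately show "dist (a m / real m) (a n / real n) < e"
        using a_cauchy_est[OF pos] by (simp add: dist_real_def)
    qed
  qed
  then show ?thesis by (simp add: Cauchy_convergent_iff)
qed

lemma rot_exists: "\<exists>\<rho>. \<forall>x. (\<lambda>n. ((f ^^ n) x - x) / real n) \<longlonglongrightarrow> \<rho>"
proof -
  obtain \<rho> where r: "(\<lambda>n. a n / real n) \<longlonglongrightarrow> \<rho>" using a_convergent by (auto simp: convergent_def)
  have "(\<lambda>n. ((f ^^ n) x - x) / real n) \<longlonglongrightarrow> \<rho>" for x
  proof -
    have d: "\<bar>((f ^^ n) x - x) / real n - a n / real n\<bar> \<le> 1 / real n" for n
    proof (cases "n = 0")
      case True then show ?thesis by simp
    next
      case False
      have "((f ^^ n) x - x) / real n - a n / real n = (D n x - D n 0) / real n"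
        by (simp add: D_def a_def diff_divide_distrib)
      then show ?thesis using D_close[of n x 0] False by (simp add: abs_divide divide_right_mono)
    qed
    have z: "(\<lambda>n. 1 / real n) \<longlonglongrightarrow> 0" by (rule lim_const_over_n)
    have "(\<lambda>n. ((f ^^ n) x - x) / real n - a n / real n) \<longlonglongrightarrow> 0"
      by (rule Lim_null_comparison[OF _ z]) (use d in auto)
    then have "(\<lambda>n. (((f ^^ n) x - x) / real n - a n / real n) + a n / real n) \<longlonglongrightarrow> 0 + \<rho>"
      by (intro tendsto_add r)
    then show ?thesis by simp
  qed
  then show ?thesis by blast
qed

lemma rot_bound:
  assumes \<rho>: "\<forall>x. (\<lambda>n. ((f ^^ n) x - x) / real n) \<longlonglongrightarrow> \<rho>"
    and q: "q > 0" and b: "\<And>x. (f ^^ q) x \<le> x + p"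
  shows "\<rho> \<le> p / q"
proof -
  have an: "a (q * k) \<le> real k * p" for k
  proof (induction k)
    case 0 then show ?case by (simp add: a_def)
  next
    case (Suc k)
    have "a (q * Suc k) = (f ^^ q) (a (q * k))" by (simp add: a_def funpow_add mult.commute)
    also have "\<dots> \<le> a (q * k) + p" by (rule b)
    finally show ?case using Suc by (simp add: algebra_simps)
  qed
  have r0: "(\<lambda>n. a n / real n) \<longlonglongrightarrow> \<rho>" using \<rho>[rule_format, of 0] by (simp add: a_def)
  have sm: "strict_mono (\<lambda>k. q * (k + 1))" using q by (auto simp: strict_mono_def)
  have "((\<lambda>n. a n / real n) \<circ> (\<lambda>k. q * (k + 1))) \<longlonglongrightarrow> \<rho>"
    by (rule LIMSEQ_subseq_LIMSEQ[OF r0 sm])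
  moreover have "((\<lambda>n. a n / real n) \<circ> (\<lambda>k. q * (k + 1))) k \<le> p / q" for k
  proof -
    have "a (q * (k+1)) \<le> real (k+1) * p" by (rule an)
    then have "a (q * (k+1)) / real (q * (k + 1)) \<le> real (k+1) * p / real (q * (k+1))"
      using q by (intro divide_right_mono) auto
    also have "\<dots> = p / q"
    proof -
      have kq: "real (k + 1) \<noteq> 0" by auto
      have "real (q * (k + 1)) = real (k + 1) * real q" by (simp only: of_nat_mult mult.commute)
      then have "real (k+1) * p / real (q * (k+1)) = real (k+1) * p / (real (k + 1) * real q)" by simp
      also have "\<dots> = p / real q" by (rule nonzero_mult_divide_mult_cancel_left[OF kq])
      finally show ?thesis .
    qed
    finally show ?thesis by simp
  qed
  ultimately show ?thesis by (intro LIMSEQ_le_const2) auto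
qed

end

lemma rot_num_eq:
  assumes "\<forall>x. (\<lambda>n. ((circle_lift g ^^ n) x - x) / real n) \<longlonglongrightarrow> \<rho>"
  shows "rot_num g = \<rho>"
  unfolding rot_num_def
proof (rule the_equality)
  show "\<forall>x. (\<lambda>n. ((circle_lift g ^^ n) x - x) / real n) \<longlonglongrightarrow> \<rho>" by (rule assms)
next
  fix \<sigma> assume "\<forall>x. (\<lambda>n. ((circle_lift g ^^ n) x - x) / real n) \<longlonglongrightarrow> \<sigma>"
  then show "\<sigma> = \<rho>" using assms LIMSEQ_unique by blast
qed

definition qI4a :: "real \<Rightarrow> real \<Rightarrow> real" where
  "qI4a u t = (- 32 * t + 32 * t^2 + 32 * u - 64 * u * t - 64 * u * t^2 - 32 * u * t^3 + 32 * u^2 + 32 * u^2 * t + 32 * u^2 * t^2 - 96 * u^2 * t^4 + 32 * u^3 * t^3 + 32 * u^3 * t^4 + 64 * u^3 * t^5)"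

lemma qI4a_bern: "3125 * qI4a u t = 150000 * (2*u + 2)^3 * (5*t - 4)^5 + (727500 * (2*u + 2)^3 * (5 - 5*t) * (5*t - 4)^4 + 1392500 * (2*u + 2)^3 * (5 - 5*t)^2 * (5*t - 4)^3 + 1317000 * (2*u + 2)^3 * (5 - 5*t)^3 * (5*t - 4)^2 + 616160 * (2*u + 2)^3 * (5 - 5*t)^4 * (5*t - 4) + 114168 * (2*u + 2)^3 * (5 - 5*t)^5 + 500000 * (-2*u - 1) * (2*u + 2)^2 * (5*t - 4)^5 + 2560000 * (-2*u - 1) * (2*u + 2)^2 * (5 - 5*t) * (5*t - 4)^4 + 5120000 * (-2*u - 1) * (2*u + 2)^2 * (5 - 5*t)^2 * (5*t - 4)^3 + 5025400 * (-2*u - 1) * (2*u + 2)^2 * (5 - 5*t)^3 * (5*t - 4)^2 + 2428880 * (-2*u - 1) * (2*u + 2)^2 * (5 - 5*t)^4 * (5*t - 4) + 463528 * (-2*u - 1) * (2*u + 2)^2 * (5 - 5*t)^5 + 400000 * (-2*u - 1)^2 * (2*u + 2) * (5*t - 4)^5 + 2360000 * (-2*u - 1)^2 * (2*u + 2) * (5 - 5*t) * (5*t - 4)^4 + 5192000 * (-2*u - 1)^2 * (2*u + 2) * (5 - 5*t)^2 * (5*t - 4)^3 + 5463200 * (-2*u - 1)^2 * (2*u + 2) * (5 - 5*t)^3 * (5*t - 4)^2 + 2786800 * (-2*u - 1)^2 * (2*u + 2) * (5 - 5*t)^4 * (5*t - 4) + 555696 * (-2*u - 1)^2 * (2*u +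 2) * (5 - 5*t)^5 + 320000 * (-2*u - 1)^3 * (5 - 5*t) * (5*t - 4)^4 + 1120000 * (-2*u - 1)^3 * (5 - 5*t)^2 * (5*t - 4)^3 + 1468800 * (-2*u - 1)^3 * (5 - 5*t)^3 * (5*t - 4)^2 + 855360 * (-2*u - 1)^3 * (5 - 5*t)^4 * (5*t - 4) + 186624 * (-2*u - 1)^3 * (5 - 5*t)^5)"
  unfolding qI4a_def by algebra

definition qI4b :: "real \<Rightarrow> real \<Rightarrow> real" where
  "qI4b u t = (- 128 * t^3 - 64 * u * t - 64 * u * t^3 - 64 * u^2 * t^2 + 64 * u^2 * t^3 + 64 * u^2 * t^4 + 64 * u^2 * t^5 - 32 * u^3 + 32 * u^3 * t + 64 * u^3 * t^3 + 32 * u^3 * t^4 + 32 * u^3 * t^5)"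

lemma qI4b_bern: "- 3125 * qI4b u t = 150000 * (-2*u)^3 * (5*t - 4)^5 + (650000 * (-2*u)^3 * (5 - 5*t) * (5*t - 4)^4 + 1111000 * (-2*u)^3 * (5 - 5*t)^2 * (5*t - 4)^3 + 935000 * (-2*u)^3 * (5 - 5*t)^3 * (5*t - 4)^2 + 386640 * (-2*u)^3 * (5 - 5*t)^4 * (5*t - 4) + 62652 * (-2*u)^3 * (5 - 5*t)^5 + 700000 * (2*u + 1) * (-2*u)^2 * (5*t - 4)^5 + 3040000 * (2*u + 1) * (-2*u)^2 * (5 - 5*t) * (5*t - 4)^4 + 5244000 * (2*u + 1) * (-2*u)^2 * (5 - 5*t)^2 * (5*t - 4)^3 + 4490000 * (2*u + 1) * (-2*u)^2 * (5 - 5*t)^3 * (5*t - 4)^2 + 1907520 * (2*u + 1) * (-2*u)^2 * (5 - 5*t)^4 * (5*t - 4) + 321536 * (2*u + 1) * (-2*u)^2 * (5 - 5*t)^5 + 1000000 * (2*u + 1)^2 * (-2*u) * (5*t - 4)^5 + 4360000 * (2*u + 1)^2 * (-2*u) * (5 - 5*t) * (5*t - 4)^4 + 7572000 * (2*u + 1)^2 * (-2*u) * (5 - 5*t)^2 * (5*t - 4)^3 + 6547200 * (2*u + 1)^2 * (-2*u) * (5 - 5*t)^3 * (5*t - 4)^2 + 2818400 * (2*u + 1)^2 * (-2*u) * (5 - 5*t)^4 * (5*t - 4) + 483200 * (2*u + 1)^2 * (-2*u) * (5 - 5*t)^5 + 400000 * (2*u + 1)^3 * (5*t - 4)^5 +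 1760000 * (2*u + 1)^3 * (5 - 5*t) * (5*t - 4)^4 + 3088000 * (2*u + 1)^3 * (5 - 5*t)^2 * (5*t - 4)^3 + 2700800 * (2*u + 1)^3 * (5 - 5*t)^3 * (5*t - 4)^2 + 1177600 * (2*u + 1)^3 * (5 - 5*t)^4 * (5*t - 4) + 204800 * (2*u + 1)^3 * (5 - 5*t)^5)"
  unfolding qI4b_def by algebra

definition qI0a :: "real \<Rightarrow> real \<Rightarrow> real" where
  "qI0a u t = (- 128 * t^3 + 64 * u * t + 64 * u * t^3 + 64 * u^2 * t^2 + 64 * u^2 * t^3 - 64 * u^2 * t^4 + 64 * u^2 * t^5 - 32 * u^3 - 32 * u^3 * t - 64 * u^3 * t^3 + 32 * u^3 * t^4 - 32 * u^3 * t^5)"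

lemma qI0a_bern: "- 3125 * qI0a u t = 150000 * (2*u)^3 * (5*t - 4)^5 + (400000 * (1 - 2*u)^3 * (5*t - 4)^5 + 1760000 * (1 - 2*u)^3 * (5 - 5*t) * (5*t - 4)^4 + 3088000 * (1 - 2*u)^3 * (5 - 5*t)^2 * (5*t - 4)^3 + 2700800 * (1 - 2*u)^3 * (5 - 5*t)^3 * (5*t - 4)^2 + 1177600 * (1 - 2*u)^3 * (5 - 5*t)^4 * (5*t - 4) + 204800 * (1 - 2*u)^3 * (5 - 5*t)^5 + 1000000 * (2*u) * (1 - 2*u)^2 * (5*t - 4)^5 + 4360000 * (2*u) * (1 - 2*u)^2 * (5 - 5*t) * (5*t - 4)^4 + 7572000 * (2*u) * (1 - 2*u)^2 * (5 - 5*t)^2 * (5*t - 4)^3 + 6547200 * (2*u) * (1 - 2*u)^2 * (5 - 5*t)^3 * (5*t - 4)^2 + 2818400 * (2*u) * (1 - 2*u)^2 * (5 - 5*t)^4 * (5*t - 4) + 483200 * (2*u) * (1 - 2*u)^2 * (5 - 5*t)^5 + 700000 * (2*u)^2 * (1 - 2*u) * (5*t - 4)^5 + 3000000 * (2*u)^2 * (1 - 2*u) * (5 - 5*t) * (5*t - 4)^4 + 5104000 * (2*u)^2 * (1 - 2*u) * (5 - 5*t)^2 * (5*t - 4)^3 + 4306800 * (2*u)^2 * (1 - 2*u) * (5 - 5*t)^3 * (5*t - 4)^2 + 1801280 * (2*u)^2 * (1 - 2*u) * (5 - 5*t)^4 * (5*t - 4) + 298496 * (2*u)^2 * (1 - 2*u)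 * (5 - 5*t)^5 + 630000 * (2*u)^3 * (5 - 5*t) * (5*t - 4)^4 + 1045000 * (2*u)^3 * (5 - 5*t)^2 * (5*t - 4)^3 + 854600 * (2*u)^3 * (5 - 5*t)^3 * (5*t - 4)^2 + 343960 * (2*u)^3 * (5 - 5*t)^4 * (5*t - 4) + 54372 * (2*u)^3 * (5 - 5*t)^5)"
  unfolding qI0a_def by algebra

definition qI0b :: "real \<Rightarrow> real \<Rightarrow> real" where
  "qI0b u t = (- 32 * t + 32 * t^3 - 32 * u + 96 * u * t + 160 * u * t^3 + 32 * u * t^4 + 32 * u^2 + 128 * u^2 * t^2 - 160 * u^2 * t^3 + 96 * u^2 * t^4 - 96 * u^2 * t^5 - 64 * u^3 * t^2 - 32 * u^3 * t^3 - 128 * u^3 * t^4 + 32 * u^3 * t^5 - 64 * u^3 * t^6)"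

lemma qI0b_bern: "15625 * qI0b u t = 1500000 * (2 - 2*u)^3 * (5*t - 4)^6 + (8325000 * (2 - 2*u)^3 * (5 - 5*t) * (5*t - 4)^5 + 19157500 * (2 - 2*u)^3 * (5 - 5*t)^2 * (5*t - 4)^4 + 23404500 * (2 - 2*u)^3 * (5 - 5*t)^3 * (5*t - 4)^3 + 16013600 * (2 - 2*u)^3 * (5 - 5*t)^4 * (5*t - 4)^2 + 5819040 * (2 - 2*u)^3 * (5 - 5*t)^5 * (5*t - 4) + 877432 * (2 - 2*u)^3 * (5 - 5*t)^6 + 5000000 * (2*u - 1) * (2 - 2*u)^2 * (5*t - 4)^6 + 28500000 * (2*u - 1) * (2 - 2*u)^2 * (5 - 5*t) * (5*t - 4)^5 + 67210000 * (2*u - 1) * (2 - 2*u)^2 * (5 - 5*t)^2 * (5*t - 4)^4 + 84012000 * (2*u - 1) * (2 - 2*u)^2 * (5 - 5*t)^3 * (5*t - 4)^3 + 58748200 * (2*u - 1) * (2 - 2*u)^2 * (5 - 5*t)^4 * (5*t - 4)^2 + 21802320 * (2*u - 1) * (2 - 2*u)^2 * (5 - 5*t)^5 * (5*t - 4) + 3356072 * (2*u - 1) * (2 - 2*u)^2 * (5 - 5*t)^6 + 4000000 * (2*u - 1)^2 * (2 - 2*u) * (5*t - 4)^6 + 24400000 * (2*u - 1)^2 * (2 - 2*u) * (5 - 5*t) * (5*t - 4)^5 + 60840000 * (2*u - 1)^2 * (2 - 2*u) * (5 - 5*t)^2 * (5*t - 4)^4 + 79724000 * (2*u - 1)^2 *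 (2 - 2*u) * (5 - 5*t)^3 * (5*t - 4)^3 + 58080000 * (2*u - 1)^2 * (2 - 2*u) * (5 - 5*t)^4 * (5*t - 4)^2 + 22351600 * (2*u - 1)^2 * (2 - 2*u) * (5 - 5*t)^5 * (5*t - 4) + 3555504 * (2*u - 1)^2 * (2 - 2*u) * (5 - 5*t)^6 + 1600000 * (2*u - 1)^3 * (5 - 5*t) * (5*t - 4)^5 + 7040000 * (2*u - 1)^3 * (5 - 5*t)^2 * (5*t - 4)^4 + 12400000 * (2*u - 1)^3 * (5 - 5*t)^3 * (5*t - 4)^3 + 10928000 * (2*u - 1)^3 * (5 - 5*t)^4 * (5*t - 4)^2 + 4818240 * (2*u - 1)^3 * (5 - 5*t)^5 * (5*t - 4) + 850176 * (2*u - 1)^3 * (5 - 5*t)^6)"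
  unfolding qI0b_def by algebra

lemma qI4a_posg:
  fixes x y s w :: real
  assumes "0 \<le> x" "0 < y" "0 < s" "0 < w"
  shows "0 < 150000 * y^3 * w^5" "0 \<le> 727500 * y^3 * s * w^4 + 1392500 * y^3 * s^2 * w^3 + 1317000 * y^3 * s^3 * w^2 + 616160 * y^3 * s^4 * w + 114168 * y^3 * s^5 + 500000 * x * y^2 * w^5 + 2560000 * x * y^2 * s * w^4 + 5120000 * x * y^2 * s^2 * w^3 + 5025400 * x * y^2 * s^3 * w^2 + 2428880 * x * y^2 * s^4 * w + 463528 * x * y^2 * s^5 + 400000 * x^2 * y * w^5 + 2360000 * x^2 * y * s * w^4 + 5192000 * x^2 * y * s^2 * w^3 + 5463200 * x^2 * y * s^3 * w^2 + 2786800 * x^2 * y * s^4 * w + 555696 * x^2 * y * s^5 + 320000 * x^3 * s * w^4 + 1120000 * x^3 * s^2 * w^3 + 1468800 * x^3 * s^3 * w^2 + 855360 * x^3 * s^4 * w + 186624 * x^3 * s^5"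
proof -
  show "0 < 150000 * y^3 * w^5" using assms by (intro mult_pos_pos zero_less_power; simp)
  show "0 \<le> 727500 * y^3 * s * w^4 + 1392500 * y^3 * s^2 * w^3 + 1317000 * y^3 * s^3 * w^2 + 616160 * y^3 * s^4 * w + 114168 * y^3 * s^5 + 500000 * x * y^2 * w^5 + 2560000 * x * y^2 * s * w^4 + 5120000 * x * y^2 * s^2 * w^3 + 5025400 * x * y^2 * s^3 * w^2 + 2428880 * x * y^2 * s^4 * w + 463528 * x * y^2 * s^5 + 400000 * x^2 * y * w^5 + 2360000 * x^2 * y * s * w^4 + 5192000 * x^2 * y * s^2 * w^3 + 5463200 * x^2 * y * s^3 * w^2 + 2786800 * x^2 * y * s^4 * w + 555696 * x^2 * y * s^5 + 320000 * x^3 * s * w^4 + 1120000 * x^3 * s^2 * w^3 + 1468800 * x^3 * s^3 * w^2 + 855360 * x^3 * s^4 * w + 186624 * x^3 * s^5" using assms by (intro add_nonneg_nonneg mult_nonneg_nonneg zero_le_power; simp)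
qed

lemma qI4a_pos:
  assumes "-1 < u" "u \<le> -1/2" "4/5 < t" "t < 1"
  shows "0 < qI4a u t"
proof -
  have h: "0 \<le> (-2*u - 1)" "0 < (2*u + 2)" "0 < (5 - 5*t)" "0 < (5*t - 4)" using assms by linarith+
  have "0 < 3125 * qI4a u t" unfolding qI4a_bern using qI4a_posg[OF h] by linarith
  then show ?thesis by simp
qed

lemma qI4b_posg:
  fixes x y s w :: real
  assumes "0 \<le> x" "0 < y" "0 < s" "0 < w"
  shows "0 < 150000 * y^3 * w^5" "0 \<le> 650000 * y^3 * s * w^4 + 1111000 * y^3 * s^2 * w^3 + 935000 * y^3 * s^3 * w^2 + 386640 * y^3 * s^4 * w + 62652 * y^3 * s^5 + 700000 * x * y^2 * w^5 + 3040000 * x * y^2 * s * w^4 + 5244000 * x * y^2 * s^2 * w^3 + 4490000 * x * y^2 * s^3 * w^2 + 1907520 * x * y^2 * s^4 * w + 321536 * x * y^2 * s^5 + 1000000 * x^2 * y * w^5 + 4360000 * x^2 * y * s * w^4 + 7572000 * x^2 * y * s^2 * w^3 + 6547200 * x^2 * y * s^3 * w^2 + 2818400 * x^2 * y * s^4 * w + 483200 * x^2 * y * s^5 + 400000 * x^3 * w^5 + 1760000 * x^3 * s * w^4 + 3088000 * x^3 * s^2 * w^3 + 2700800 * x^3 * s^3 * w^2 + 1177600 * x^3 * s^4 * w + 204800 * x^3 * s^5"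
proof -
  show "0 < 150000 * y^3 * w^5" using assms by (intro mult_pos_pos zero_less_power; simp)
  show "0 \<le> 650000 * y^3 * s * w^4 + 1111000 * y^3 * s^2 * w^3 + 935000 * y^3 * s^3 * w^2 + 386640 * y^3 * s^4 * w + 62652 * y^3 * s^5 + 700000 * x * y^2 * w^5 + 3040000 * x * y^2 * s * w^4 + 5244000 * x * y^2 * s^2 * w^3 + 4490000 * x * y^2 * s^3 * w^2 + 1907520 * x * y^2 * s^4 * w + 321536 * x * y^2 * s^5 + 1000000 * x^2 * y * w^5 + 4360000 * x^2 * y * s * w^4 + 7572000 * x^2 * y * s^2 * w^3 + 6547200 * x^2 * y * s^3 * w^2 + 2818400 * x^2 * y * s^4 * w + 483200 * x^2 * y * s^5 + 400000 * x^3 * w^5 + 1760000 * x^3 * s * w^4 + 3088000 * x^3 * s^2 * w^3 + 2700800 * x^3 * s^3 * w^2 + 1177600 * x^3 * s^4 * w + 204800 * x^3 * s^5" using assms by (intro add_nonneg_nonneg mult_nonneg_nonneg zero_le_power; simp)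
qed

lemma qI4b_pos:
  assumes "-1/2 \<le> u" "u < 0" "4/5 < t" "t < 1"
  shows "qI4b u t < 0"
proof -
  have h: "0 \<le> (2*u + 1)" "0 < (-2*u)" "0 < (5 - 5*t)" "0 < (5*t - 4)" using assms by linarith+
  have "0 < - 3125 * qI4b u t" unfolding qI4b_bern using qI4b_posg[OF h] by linarith
  then show ?thesis by simp
qed

lemma qI0a_posg:
  fixes x y s w :: real
  assumes "0 < x" "0 \<le> y" "0 < s" "0 < w"
  shows "0 < 150000 * x^3 * w^5" "0 \<le> 400000 * y^3 * w^5 + 1760000 * y^3 * s * w^4 + 3088000 * y^3 * s^2 * w^3 + 2700800 * y^3 * s^3 * w^2 + 1177600 * y^3 * s^4 * w + 204800 * y^3 * s^5 + 1000000 * x * y^2 * w^5 + 4360000 * x * y^2 * s * w^4 + 7572000 * x * y^2 * s^2 * w^3 + 6547200 * x * y^2 * s^3 * w^2 + 2818400 * x * y^2 * s^4 * w + 483200 * x * y^2 * s^5 + 700000 * x^2 * y * w^5 + 3000000 * x^2 * y * s * w^4 + 5104000 * x^2 * y * s^2 * w^3 + 4306800 * x^2 * y * s^3 * w^2 + 1801280 * x^2 * y * s^4 * w + 298496 * x^2 * y * s^5 + 630000 * x^3 * s * w^4 + 1045000 * x^3 * s^2 * w^3 + 854600 * x^3 * s^3 * w^2 + 343960 * x^3 * s^4 * w + 54372 * x^3 * s^5"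
proof -
  show "0 < 150000 * x^3 * w^5" using assms by (intro mult_pos_pos zero_less_power; simp)
  show "0 \<le> 400000 * y^3 * w^5 + 1760000 * y^3 * s * w^4 + 3088000 * y^3 * s^2 * w^3 + 2700800 * y^3 * s^3 * w^2 + 1177600 * y^3 * s^4 * w + 204800 * y^3 * s^5 + 1000000 * x * y^2 * w^5 + 4360000 * x * y^2 * s * w^4 + 7572000 * x * y^2 * s^2 * w^3 + 6547200 * x * y^2 * s^3 * w^2 + 2818400 * x * y^2 * s^4 * w + 483200 * x * y^2 * s^5 + 700000 * x^2 * y * w^5 + 3000000 * x^2 * y * s * w^4 + 5104000 * x^2 * y * s^2 * w^3 + 4306800 * x^2 * y * s^3 * w^2 + 1801280 * x^2 * y * s^4 * w + 298496 * x^2 * y * s^5 + 630000 * x^3 * s * w^4 + 1045000 * x^3 * s^2 * w^3 + 854600 * x^3 * s^3 * w^2 + 343960 * x^3 * s^4 * w + 54372 * x^3 * s^5" using assms by (intro add_nonneg_nonneg mult_nonneg_nonneg zero_le_power; simp)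
qed

lemma qI0a_pos:
  assumes "0 < u" "u \<le> 1/2" "4/5 < t" "t < 1"
  shows "qI0a u t < 0"
proof -
  have h: "0 < (2*u)" "0 \<le> (1 - 2*u)" "0 < (5 - 5*t)" "0 < (5*t - 4)" using assms by linarith+
  have "0 < - 3125 * qI0a u t" unfolding qI0a_bern using qI0a_posg[OF h] by linarith
  then show ?thesis by simp
qed

lemma qI0b_posg:
  fixes x y s w :: real
  assumes "0 \<le> x" "0 < y" "0 < s" "0 < w"
  shows "0 < 1500000 * y^3 * w^6" "0 \<le> 8325000 * y^3 * s * w^5 + 19157500 * y^3 * s^2 * w^4 + 23404500 * y^3 * s^3 * w^3 + 16013600 * y^3 * s^4 * w^2 + 5819040 * y^3 * s^5 * w + 877432 * y^3 * s^6 + 5000000 * x * y^2 * w^6 + 28500000 * x * y^2 * s * w^5 + 67210000 * x * y^2 * s^2 * w^4 + 84012000 * x * y^2 * s^3 * w^3 + 58748200 * x * y^2 * s^4 * w^2 + 21802320 * x * y^2 * s^5 * w + 3356072 * x * y^2 * s^6 + 4000000 * x^2 * y * w^6 + 24400000 * x^2 * y * s * w^5 + 60840000 * x^2 * y * s^2 * w^4 + 79724000 * x^2 * y * s^3 * w^3 + 58080000 * x^2 * y * s^4 * w^2 + 22351600 * x^2 * y * s^5 * w + 3555504 * x^2 * y * s^6 + 1600000 * x^3 * s * w^5 + 7040000 * x^3 * s^2 * w^4 + 12400000 * x^3 * s^3 * w^3 + 10928000 * x^3 * s^4 * w^2 + 4818240 * x^3 * s^5 * w + 850176 * x^3 * 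s^6"
proof -
  show "0 < 1500000 * y^3 * w^6" using assms by (intro mult_pos_pos zero_less_power; simp)
  show "0 \<le> 8325000 * y^3 * s * w^5 + 19157500 * y^3 * s^2 * w^4 + 23404500 * y^3 * s^3 * w^3 + 16013600 * y^3 * s^4 * w^2 + 5819040 * y^3 * s^5 * w + 877432 * y^3 * s^6 + 5000000 * x * y^2 * w^6 + 28500000 * x * y^2 * s * w^5 + 67210000 * x * y^2 * s^2 * w^4 + 84012000 * x * y^2 * s^3 * w^3 + 58748200 * x * y^2 * s^4 * w^2 + 21802320 * x * y^2 * s^5 * w + 3356072 * x * y^2 * s^6 + 4000000 * x^2 * y * w^6 + 24400000 * x^2 * y * s * w^5 + 60840000 * x^2 * y * s^2 * w^4 + 79724000 * x^2 * y * s^3 * w^3 + 58080000 * x^2 * y * s^4 * w^2 + 22351600 * x^2 * y * s^5 * w + 3555504 * x^2 * y * s^6 + 1600000 * x^3 * s * w^5 + 7040000 * x^3 * s^2 * w^4 + 12400000 * x^3 * s^3 * w^3 + 10928000 * x^3 * s^4 * w^2 + 4818240 * x^3 * s^5 * w + 850176 * x^3 * s^6" using assms by (intro add_nonneg_nonneg mult_nonneg_nonneg zero_le_power; simp)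
qed

lemma qI0b_pos:
  assumes "1/2 \<le> u" "u < 1" "4/5 < t" "t < 1"
  shows "0 < qI0b u t"
proof -
  have h: "0 \<le> (2*u - 1)" "0 < (2 - 2*u)" "0 < (5 - 5*t)" "0 < (5*t - 4)" using assms by linarith+
  have "0 < 15625 * qI0b u t" unfolding qI0b_bern using qI0b_posg[OF h] by linarith
  then show ?thesis by simp
qed

definition rcv :: "real \<Rightarrow> real" where "rcv t = (t - 1) / (t + 1)"
definition Ap :: "real \<Rightarrow> complex" where "Ap t = Complex ((t\<^sup>2 - 1) / (t\<^sup>2 + 1)) (- 2 * t / (t\<^sup>2 + 1))"
definition Bp :: "real \<Rightarrow> complex" where "Bp t = Complex ((t\<^sup>2 - 1) / (t\<^sup>2 + 1)) (2 * t / (t\<^sup>2 + 1))"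
definition qv :: "complex \<Rightarrow> complex \<Rightarrow> real" where
  "qv z v = Im (1 - z * cnj v) / Re (1 - z * cnj v)"

lemma qq_qv: "qq z x = qv z (circ_pt x)"
  by (simp add: qq_def qv_def uu_def)

lemma Gz_qv: "Gz z x = x + 1/2 + arctan (qv z (circ_pt x)) / pi"
  by (simp add: Gz_def qq_qv)

lemma sig_eqI: "1 - cnj z * v \<noteq> 0 \<Longrightarrow> z - v = w * (1 - cnj z * v) \<Longrightarrow> sig z v = w"
  by (simp add: sig_def)

lemma circ_34: "circ_pt (3/4) = - \<i>"
proof -
  have "circ_pt (3/4) = circ_pt (-1/4 + 1)" by simp
  also have "\<dots> = circ_pt (-1/4)" by (rule circ_pt_add1)
  also have "\<dots> = cis (- (pi/2))" by (simp add: circ_pt_def)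
  finally show ?thesis by simp
qed

lemma circ_54: "circ_pt (5/4) = \<i>"
proof -
  have "circ_pt (5/4) = circ_pt (1/4 + 1)" by simp
  also have "\<dots> = circ_pt (1/4)" by (rule circ_pt_add1)
  also have "\<dots> = cis (pi/2)" by (simp add: circ_pt_def)
  finally show ?thesis by simp
qed

lemma circ_1: "circ_pt 1 = 1"
  using circ_pt_add1[of 0] by (simp add: circ_pt_def)

locale geo =
  fixes t :: real
  assumes t1: "4/5 < t" and t2: "t < 1"
begin

abbreviation "P \<equiv> \<i> * complex_of_real t"
abbreviation "Q \<equiv> - \<i> * complex_of_real t"
abbreviation "rc \<equiv> rcv t"
abbreviation "Rc \<equiv> complex_of_real (rcv t)"
abbreviation "A \<equiv> Ap t"
abbreviation "B \<equiv> Bp t"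

lemma tpos: "0 < t" using t1 by simp

lemma rc_neg: "rc < 0" "-1 < rc"
  using t1 t2 by (auto simp: rcv_def field_simps)

lemma nP: "norm P < 1" using t1 t2 by (simp add: norm_mult)
lemma nQ: "norm Q < 1" using t1 t2 by (simp add: norm_mult)
lemma nR: "norm Rc < 1" using rc_neg by simp

lemma t2p: "t\<^sup>2 + 1 > 0" using zero_le_power2[of t] by linarith

lemma cmul1: "Complex a c * (1 - complex_of_real r * \<i>) = Complex (a + c * r) (c - a * r)"
  by (simp add: complex_eq_iff)
lemma cmul2: "Complex a c * (1 + complex_of_real r * \<i>) = Complex (a - c * r) (c + a * r)"
  by (simp add: complex_eq_iff)

definition "aa = (t\<^sup>2 - 1) / (t\<^sup>2 + 1)"
definition "bb = 2 * t / (t\<^sup>2 + 1)"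

lemma ttt: "t + 1 \<noteq> 0" "t\<^sup>2 + 1 \<noteq> 0" using t1 t2p by auto

lemma E1: "aa - bb * rc = rc" unfolding aa_def bb_def rcv_def using ttt
  by (simp add: divide_simps) (simp add: algebra_simps power2_eq_square)
lemma E2: "bb + aa * rc = 1" unfolding aa_def bb_def rcv_def using ttt
  by (simp add: divide_simps) (simp add: algebra_simps power2_eq_square)
lemma E3: "aa - bb * t = -1" unfolding aa_def bb_def using ttt
  by (simp add: divide_simps) (simp add: algebra_simps power2_eq_square)
lemma E4: "bb + aa * t = t" unfolding aa_def bb_def using ttt
  by (simp add: divide_simps) (simp add: algebra_simps power2_eq_square)

lemma A_eq: "A = Complex aa (- bb)" by (simp add: Ap_def aa_def bb_def)
lemma B_eq: "B = Complex aa bb" by (simp add: Bp_def aa_def bb_def)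

lemma sig_R_i: "sig Rc \<i> = A"
proof (rule sig_eqI)
  show "1 - cnj Rc * \<i> \<noteq> 0" by (rule sig_denom_nz[OF nR]) simp
  have "A * (1 - cnj Rc * \<i>) = Complex (aa - bb * rc) (- bb - aa * rc)"
    unfolding A_eq using cmul1[of aa "- bb" rc] by simp
  also have "\<dots> = Rc - \<i>" using E1 E2 by (simp add: complex_eq_iff)
  finally show "Rc - \<i> = A * (1 - cnj Rc * \<i>)" ..
qed

lemma sig_R_mi: "sig Rc (- \<i>) = B"
proof (rule sig_eqI)
  show "1 - cnj Rc * (- \<i>) \<noteq> 0" by (rule sig_denom_nz[OF nR]) simp
  have "B * (1 - cnj Rc * (- \<i>)) = Complex (aa - bb * rc) (bb + aa * rc)"
    unfolding B_eq using cmul2[of aa bb rc] by simp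
  also have "\<dots> = Rc - (- \<i>)" using E1 E2 by (simp add: complex_eq_iff)
  finally show "Rc - (- \<i>) = B * (1 - cnj Rc * (- \<i>))" ..
qed

lemma sig_Q_1: "sig Q 1 = A"
proof (rule sig_eqI)
  show "1 - cnj Q * 1 \<noteq> 0" by (rule sig_denom_nz[OF nQ]) simp
  have "A * (1 - cnj Q * 1) = Complex (aa - bb * t) (- bb - aa * t)"
    unfolding A_eq using cmul1[of aa "- bb" t] by (simp add: mult.commute)
  also have "\<dots> = Q - 1" using E3 E4 by (simp add: complex_eq_iff)
  finally show "Q - 1 = A * (1 - cnj Q * 1)" ..
qed

lemma sig_P_1: "sig P 1 = B"
proof (rule sig_eqI)
  show "1 - cnj P * 1 \<noteq> 0" by (rule sig_denom_nz[OF nP]) simp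
  have "B * (1 - cnj P * 1) = Complex (aa - bb * t) (bb + aa * t)"
    unfolding B_eq using cmul2[of aa bb t] by (simp add: mult.commute)
  also have "\<dots> = P - 1" using E3 E4 by (simp add: complex_eq_iff)
  finally show "P - 1 = B * (1 - cnj P * 1)" ..
qed

lemma nA: "norm A = 1" using sig_norm[OF nQ, of 1] sig_Q_1 by simp
lemma nB: "norm B = 1" using sig_norm[OF nP, of 1] sig_P_1 by simp

lemma sig_Q_A: "sig Q A = 1" using sig_sig[OF nQ, of 1] sig_Q_1 by simp
lemma sig_R_A: "sig Rc A = \<i>" using sig_sig[OF nR, of \<i>] sig_R_i by simp
lemma sig_P_B: "sig P B = 1" using sig_sig[OF nP, of 1] sig_P_1 by simp
lemma sig_R_B: "sig Rc B = - \<i>" using sig_sig[OF nR, of "- \<i>"] sig_R_mi by simp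

lemma qv_mi: "qv P (- \<i>) = 0" "qv Q (- \<i>) = 0" "qv Rc (- \<i>) = - rc"
  by (simp_all add: qv_def)
lemma qv_i: "qv P \<i> = 0" "qv Q \<i> = 0" "qv Rc \<i> = rc"
  by (simp_all add: qv_def)
lemma qv_1: "qv P 1 = - t" "qv Q 1 = t" "qv Rc 1 = 0"
  by (simp_all add: qv_def)

lemma qvP: "qv P (Complex a b) = - t * a / (1 - t * b)"
  by (simp add: qv_def)
lemma qvQ: "qv Q (Complex a b) = t * a / (1 + t * b)"
  by (simp add: qv_def)
lemma qvR: "qv Rc (Complex a b) = rc * b / (1 - rc * a)"
  by (simp add: qv_def)

lemma tt: "t\<^sup>2 + 1 \<noteq> 0" "t + 1 \<noteq> 0" "1 + 3 * t\<^sup>2 \<noteq> 0" "1 - t \<noteq> 0" "1 - t\<^sup>2 \<noteq> 0"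
proof -
  have "0 \<le> t\<^sup>2" by simp
  moreover have "t\<^sup>2 < 1" using t1 t2 by (simp add: power2_eq_square) (metis less_trans mult_strict_mono' mult_1 le_less tpos)
  ultimately show "t\<^sup>2 + 1 \<noteq> 0" "t + 1 \<noteq> 0" "1 + 3 * t\<^sup>2 \<noteq> 0" "1 - t \<noteq> 0" "1 - t\<^sup>2 \<noteq> 0"
    using t1 t2 by linarith+
qed

lemma qv_B: "qv P B = t" "qv Q B = t * (t\<^sup>2 - 1) / (1 + 3 * t\<^sup>2)" "qv Rc B = rc"
proof -
  show "qv P B = t" unfolding Bp_def qvP using tt by (simp add: divide_simps) (simp add: algebra_simps power2_eq_square)
  show "qv Q B = t * (t\<^sup>2 - 1) / (1 + 3 * t\<^sup>2)" unfolding Bp_def qvQ using tt by (simp add: divide_simps) (simp add: algebra_simps power2_eq_square)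
  show "qv Rc B = rc" unfolding Bp_def qvR using tt tpos by (unfold rcv_def, simp add: divide_simps, simp add: algebra_simps power2_eq_square, smt (verit) mult_pos_pos)
qed

lemma qv_A: "qv P A = t * (1 - t\<^sup>2) / (1 + 3 * t\<^sup>2)" "qv Q A = - t" "qv Rc A = - rc"
proof -
  show "qv P A = t * (1 - t\<^sup>2) / (1 + 3 * t\<^sup>2)" unfolding Ap_def qvP using tt by (simp add: divide_simps) (simp add: algebra_simps power2_eq_square)
  show "qv Q A = - t" unfolding Ap_def qvQ using tt by (simp add: divide_simps) (simp add: algebra_simps power2_eq_square)
  show "qv Rc A = - rc" unfolding Ap_def qvR using tt tpos by (unfold rcv_def, simp add: divide_simps, simp add: algebra_simps power2_eq_square, smt (verit) mult_pos_pos)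
qed

end

lemma Gz_le_iff: "Gz a x \<le> Gz b x \<longleftrightarrow> qq a x \<le> qq b x"
  unfolding Gz_def using pi_gt_zero by (simp add: divide_le_cancel arctan_le_iff)

lemma F3_eq_a: "qq a x \<le> qq b x \<Longrightarrow> qq a x \<le> qq c x \<Longrightarrow> F3 a b c x = Gz a x"
  using Gz_le_iff[of a x b] Gz_le_iff[of a x c] by (auto simp: F3_def min_def)
lemma F3_eq_b: "qq b x \<le> qq a x \<Longrightarrow> qq b x \<le> qq c x \<Longrightarrow> F3 a b c x = Gz b x"
  using Gz_le_iff[of b x a] Gz_le_iff[of b x c] by (auto simp: F3_def min_def)
lemma F3_eq_c: "qq c x \<le> qq a x \<Longrightarrow> qq c x \<le> qq b x \<Longrightarrow> F3 a b c x = Gz c x"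
  using Gz_le_iff[of c x a] Gz_le_iff[of c x b] by (auto simp: F3_def min_def)

lemma Gz_q0: "qv z (circ_pt x) = 0 \<Longrightarrow> Gz z x = x + 1/2"
  by (simp add: Gz_qv)
lemma Gz_qpos: "qv z (circ_pt x) > 0 \<Longrightarrow> x + 1/2 < Gz z x"
  using pi_gt_zero by (simp add: Gz_qv)
lemma Gz_qneg: "qv z (circ_pt x) < 0 \<Longrightarrow> Gz z x < x + 1/2"
  using pi_gt_zero by (simp add: Gz_qv divide_neg_pos)

lemma circ_pin: "circ_pt y = circ_pt c \<Longrightarrow> \<bar>y - c\<bar> < 1 \<Longrightarrow> y = c"
proof -
  assume "circ_pt y = circ_pt c" "\<bar>y - c\<bar> < 1"
  then obtain k where k: "y - c = of_int k" using circ_pt_eq_imp_Ints by (metis Ints_cases)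
  then have "\<bar>of_int k :: real\<bar> < 1" using \<open>\<bar>y - c\<bar> < 1\<close> by simp
  then have "k = 0" by linarith
  then show "y = c" using k by simp
qed

lemma circ_74: "circ_pt (7/4) = - \<i>" using circ_pt_add1[of "3/4"] circ_34 by simp
lemma circ_94: "circ_pt (9/4) = \<i>" using circ_pt_add1[of "5/4"] circ_54 by simp
lemma circ_2: "circ_pt 2 = 1" using circ_pt_add1[of 1] circ_1 by simp

context geo begin

abbreviation "Gp \<equiv> Gz P"
abbreviation "Gq \<equiv> Gz Q"
abbreviation "Gc \<equiv> Gz Rc"
abbreviation "Fc \<equiv> F3 P Q Rc"

lemma cG: "circ_pt (Gp x) = sig P (circ_pt x)" "circ_pt (Gq x) = sig Q (circ_pt x)" "circ_pt (Gc x) = sig Rc (circ_pt x)"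
  using circ_Gz nP nQ nR by auto

lemma Gp34: "Gp (3/4) = 5/4" using Gz_q0[of P "3/4"] qv_mi circ_34 by simp
lemma Gq34: "Gq (3/4) = 5/4" using Gz_q0[of Q "3/4"] qv_mi circ_34 by simp
lemma Gc34: "5/4 < Gc (3/4)" "Gc (3/4) < 7/4" "circ_pt (Gc (3/4)) = B"
proof -
  show "5/4 < Gc (3/4)" using Gz_qpos[of Rc "3/4"] qv_mi circ_34 rc_neg by simp
  show "Gc (3/4) < 7/4" using Gz_bounds[where x="3/4" and z=Rc] by simp
  show "circ_pt (Gc (3/4)) = B" using cG circ_34 sig_R_mi by simp
qed

lemma Fc34: "Fc (3/4) = 5/4"
proof -
  have "qq P (3/4) \<le> qq Q (3/4)" "qq P (3/4) \<le> qq Rc (3/4)"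
    using qv_mi circ_34 rc_neg by (simp_all add: qq_qv)
  then show ?thesis using F3_eq_a Gp34 by simp
qed

lemma Gc54: "5/4 < Gc (5/4)" "Gc (5/4) < 7/4" "circ_pt (Gc (5/4)) = A"
proof -
  show "5/4 < Gc (5/4)" using Gz_bounds[where x="5/4" and z=Rc] by simp
  show "Gc (5/4) < 7/4" using Gz_qneg[of Rc "5/4"] qv_i circ_54 rc_neg by simp
  show "circ_pt (Gc (5/4)) = A" using cG circ_54 sig_R_i by simp
qed

lemma Fc54: "Fc (5/4) = Gc (5/4)"
proof -
  have "qq Rc (5/4) \<le> qq P (5/4)" "qq Rc (5/4) \<le> qq Q (5/4)"
    using qv_i circ_54 rc_neg by (simp_all add: qq_qv)
  then show ?thesis using F3_eq_c by simp
qed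

lemma min_at_A: "qv Q A \<le> qv P A" "qv Q A \<le> qv Rc A"
proof -
  have "0 \<le> t * (1 - t\<^sup>2) / (1 + 3 * t\<^sup>2)"
  proof -
    have "t\<^sup>2 \<le> 1" using t1 t2 by (simp add: power2_eq_square) (metis less_le_not_le mult_le_one nle_le tpos less_imp_le)
    then show ?thesis using tpos by (intro divide_nonneg_pos mult_nonneg_nonneg) (auto simp: add_pos_nonneg)
  qed
  then show "qv Q A \<le> qv P A" using qv_A tpos by simp
  show "qv Q A \<le> qv Rc A" using qv_A tpos rc_neg by simp
qed

lemma min_at_B: "qv Rc B \<le> qv P B" "qv Rc B \<le> qv Q B"
proof -
  show "qv Rc B \<le> qv P B" using qv_B tpos rc_neg by simp
  have d: "t * (t\<^sup>2 - 1) / (1 + 3 * t\<^sup>2) - rc = (1 - t)\<^sup>2 * (1 + t\<^sup>2) / ((t + 1) * (1 + 3 * t\<^sup>2))"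
    unfolding rcv_def using tt by (simp add: divide_simps) (simp add: algebra_simps power2_eq_square)
  have "0 \<le> (1 - t)\<^sup>2 * (1 + t\<^sup>2) / ((t + 1) * (1 + 3 * t\<^sup>2))"
    using tpos by (intro divide_nonneg_pos mult_nonneg_nonneg mult_pos_pos) (auto simp: add_pos_nonneg)
  then show "qv Rc B \<le> qv Q B" using qv_B d by simp
qed

lemma GqGc54: "Gq (Gc (5/4)) = 2"
proof (rule circ_pin)
  show "circ_pt (Gq (Gc (5/4))) = circ_pt 2" using cG Gc54 sig_Q_A circ_2 by simp
  show "\<bar>Gq (Gc (5/4)) - 2\<bar> < 1" using Gz_bounds[where x="Gc (5/4)" and z=Q] Gc54 by simp
qed

lemma FcGc54: "Fc (Gc (5/4)) = Gq (Gc (5/4))"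
  using F3_eq_b min_at_A Gc54(3) by (simp add: qq_qv)

lemma Fc2_54: "Fc (Fc (5/4)) = 2" by (simp only: Fc54 FcGc54 GqGc54)

lemma Gp1: "1 < Gp 1" "Gp 1 < 3/2" "circ_pt (Gp 1) = B"
proof -
  show "1 < Gp 1" using Gz_bounds[where x=1 and z=P] by simp
  show "Gp 1 < 3/2" using Gz_qneg[of P 1] qv_1 circ_1 tpos by simp
  show "circ_pt (Gp 1) = B" using cG circ_1 sig_P_1 by simp
qed

lemma Fc1: "Fc 1 = Gp 1"
  using F3_eq_a qv_1 circ_1 tpos by (simp add: qq_qv)

lemma GcGp1: "Gc (Gp 1) = 7/4"
proof (rule circ_pin)
  show "circ_pt (Gc (Gp 1)) = circ_pt (7/4)" using cG Gp1 sig_R_B circ_74 by simp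
  show "\<bar>Gc (Gp 1) - 7/4\<bar> < 1" using Gz_bounds[where x="Gp 1" and z=Rc] Gp1 by simp
qed

lemma FcGp1: "Fc (Gp 1) = Gc (Gp 1)"
  using F3_eq_c min_at_B Gp1(3) by (simp add: qq_qv)

lemma Fc74: "Fc (7/4) = 9/4"
  using Fc34 F3_periodic1[of P Q Rc "3/4"] by simp

lemma Fc3_1: "Fc (Fc (Fc 1)) = 9/4"
  by (simp only: Fc1 FcGp1 GcGp1 Fc74)

lemma Gq74: "Gq (7/4) = 9/4" using Gz_q0[of Q "7/4"] qv_mi circ_74 by simp
lemma Gp74: "Gp (7/4) = 9/4" using Gz_q0[of P "7/4"] qv_mi circ_74 by simp
lemma Gq54: "Gq (5/4) = 7/4" using Gz_q0[of Q "5/4"] qv_i circ_54 by simp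

lemma Ea: "Gq (Gc (Gp (3/4))) = Gp (Gc (3/4))"
proof -
  have "Gp (Gc (3/4)) = 2"
  proof (rule circ_pin)
    show "circ_pt (Gp (Gc (3/4))) = circ_pt 2" using cG Gc34 sig_P_B circ_2 by simp
    show "\<bar>Gp (Gc (3/4)) - 2\<bar> < 1" using Gz_bounds[where x="Gc (3/4)" and z=P] Gc34 by simp
  qed
  then show ?thesis by (simp only: Gp34 GqGc54)
qed

lemma Gq1: "3/2 < Gq 1" "Gq 1 < 2" "circ_pt (Gq 1) = A"
proof -
  show "3/2 < Gq 1" using Gz_qpos[of Q 1] qv_1 circ_1 tpos by simp
  show "Gq 1 < 2" using Gz_bounds[where x=1 and z=Q] by simp
  show "circ_pt (Gq 1) = A" using cG circ_1 sig_Q_1 by simp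
qed

lemma GcGq1: "Gc (Gq 1) = 9/4"
proof (rule circ_pin)
  show "circ_pt (Gc (Gq 1)) = circ_pt (9/4)" using cG Gq1 sig_R_A circ_94 by simp
  show "\<bar>Gc (Gq 1) - 9/4\<bar> < 1" using Gz_bounds[where x="Gq 1" and z=Rc] Gq1 by simp
qed

lemma Eb1: "Gq (Gc (Gp 1)) = Gc (Gq 1)" by (simp only: GcGp1 Gq74 GcGq1)
lemma Eb2: "Gp (Gc (Gp 1)) = Gc (Gq 1)" by (simp only: GcGp1 Gp74 GcGq1)

lemma Ec: "Gp (Gq (Gc (5/4))) = Gc (Gq (5/4))"
proof -
  have e: "Gp 1 = Gc (3/4)"
  proof (rule circ_pin)
    show "circ_pt (Gp 1) = circ_pt (Gc (3/4))" using Gp1 Gc34 by simp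
    show "\<bar>Gp 1 - Gc (3/4)\<bar> < 1" using Gp1 Gc34 by simp
  qed
  have "Gp (Gq (Gc (5/4))) = Gp 1 + 1" using Gz_periodic1[of P 1] by (simp only: GqGc54) simp
  moreover have "Gc (Gq (5/4)) = Gc (3/4) + 1" using Gz_periodic1[of Rc "3/4"] by (simp only: Gq54) simp
  ultimately show ?thesis using e by simp
qed

end

definition stP :: "real \<Rightarrow> complex \<times> complex \<Rightarrow> complex \<times> complex" where
  "stP t p = (\<i> * t * snd p - fst p, snd p + \<i> * t * fst p)"
definition stQ :: "real \<Rightarrow> complex \<times> complex \<Rightarrow> complex \<times> complex" where
  "stQ t p = (- \<i> * t * snd p - fst p, snd p - \<i> * t * fst p)"
definition stR :: "real \<Rightarrow> complex \<times> complex \<Rightarrow> complex \<times> complex" where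
  "stR t p = ((t - 1) * snd p - (t + 1) * fst p, (t + 1) * snd p - (t - 1) * fst p)"
definition X0 :: "real \<Rightarrow> complex \<times> complex" where
  "X0 u = (1 + \<i> * u, 1 - \<i> * u)"
definition imc :: "complex \<times> complex \<Rightarrow> complex \<times> complex \<Rightarrow> real" where
  "imc p1 p2 = Im (fst p1 * cnj (snd p1) * cnj (fst p2) * snd p2)"


lemma imc_I4a: "imc (stP t (stR t (X0 u))) (stQ t (stR t (stP t (X0 u)))) = (u+1) * (t-1) * (t-1) * t * (t+1) * qI4a u t"
  unfolding imc_def stP_def stQ_def stR_def X0_def qI4a_def
  by (simp add: algebra_simps power2_eq_square power3_eq_cube) (simp add: algebra_simps power_def)

lemma imc_I4b: "imc (stR t (stQ t (X0 u))) (stQ t (stR t (stP t (X0 u)))) = u * (t-1) * (t-1) * t * (t+1) * qI4b u t"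
  unfolding imc_def stP_def stQ_def stR_def X0_def qI4b_def
  by (simp add: algebra_simps power2_eq_square power3_eq_cube) (simp add: algebra_simps power_def)

lemma imc_I0a: "imc (stR t (stQ t (X0 u))) (stP t (stR t (stP t (X0 u)))) = u * (t-1) * t * (t+1) * (t+1) * qI0a u t"
  unfolding imc_def stP_def stQ_def stR_def X0_def qI0a_def
  by (simp add: algebra_simps power2_eq_square power3_eq_cube) (simp add: algebra_simps power_def)

lemma imc_I0b: "imc (stR t (stQ t (X0 u))) (stP t (stQ t (stR t (X0 u)))) = (u-1) * (t-1) * t * (t+1) * qI0b u t"
  unfolding imc_def stP_def stQ_def stR_def X0_def qI0b_def
  by (simp add: algebra_simps power2_eq_square power3_eq_cube) (simp add: algebra_simps power_def)

definition ptof :: "complex \<times> complex \<Rightarrow> complex" where "ptof p = fst p / snd p"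
definition good :: "complex \<times> complex \<Rightarrow> bool" where "good p \<longleftrightarrow> snd p \<noteq> 0 \<and> norm (ptof p) = 1"
definition yy :: "real \<Rightarrow> real" where "yy u = 1 + arctan u / pi"

lemma circ_yy: "circ_pt (yy u) = ptof (X0 u)"
proof -
  have "circ_pt (yy u) = circ_pt (arctan u / pi)"
    using circ_pt_add1[of "arctan u / pi"] by (simp add: yy_def add.commute)
  also have "\<dots> = cis (2 * arctan u)" by (simp add: circ_pt_def)
  finally show ?thesis by (simp add: cis_double_arctan ptof_def X0_def)
qed

lemma good_X0: "good (X0 u)"
  unfolding good_def using circ_yy[of u] circ_pt_norm[of "yy u"] one_minus_im_nz[of u]
  by (simp add: X0_def)

lemma yy_vals: "yy (-1) = 3/4" "yy 0 = 1" "yy 1 = 5/4"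
  by (simp_all add: yy_def arctan_minus arctan_one)

lemma yy_cont: "continuous_on S yy"
  unfolding yy_def[abs_def] by (intro continuous_intros) auto

lemma sig_proj: assumes "Y \<noteq> 0" shows "sig z (X / Y) = (z * Y - X) / (Y - cnj z * X)"
proof -
  have a: "z - X / Y = (z * Y - X) / Y" using assms by (simp add: field_simps)
  have b: "1 - cnj z * (X / Y) = (Y - cnj z * X) / Y" using assms by (simp add: field_simps)
  show ?thesis unfolding sig_def a b using assms by simp
qed

lemma imc_sign:
  assumes g1: "good p1" and g2: "good p2"
  shows "Im (ptof p1 * cnj (ptof p2)) = imc p1 p2 / ((cmod (snd p1))\<^sup>2 * (cmod (snd p2))\<^sup>2)"
proof -
  obtain X1 Y1 X2 Y2 where p: "p1 = (X1, Y1)" "p2 = (X2, Y2)" by (cases p1, cases p2) auto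
  have y: "Y1 \<noteq> 0" "Y2 \<noteq> 0" using g1 g2 p by (auto simp: good_def)
  have n1: "Y1 * cnj Y1 = of_real ((cmod Y1)\<^sup>2)" "Y2 * cnj Y2 = of_real ((cmod Y2)\<^sup>2)"
    by (metis complex_norm_square of_real_power)+
  have "ptof p1 * cnj (ptof p2) = (X1 * cnj Y1 * cnj X2 * Y2) / ((Y1 * cnj Y1) * (Y2 * cnj Y2))"
    using y by (simp add: p ptof_def field_simps)
  also have "\<dots> = (X1 * cnj Y1 * cnj X2 * Y2) / of_real ((cmod Y1)\<^sup>2 * (cmod Y2)\<^sup>2)"
    unfolding n1 by simp
  finally show ?thesis by (simp add: p imc_def)
qed

lemma ivt_l:
  fixes d :: "real \<Rightarrow> real"
  assumes c: "continuous_on {a..b} d" and d0: "d a = 0"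
    and s: "\<And>u. a < u \<Longrightarrow> u \<le> b \<Longrightarrow> sin (2*pi*d u) > 0"
    and u: "a < u" "u \<le> b"
  shows "d u > 0"
proof (rule ccontr)
  assume nu: "\<not> d u > 0"
  have su: "sin (2*pi*d u) > 0" using s u .
  have lt: "d u < -1/2"
  proof (rule ccontr)
    assume "\<not> d u < -1/2"
    then have h: "-1/2 \<le> d u" "d u \<le> 0" using nu by auto
    have h1: "2*pi*(-1/2) \<le> 2*pi*d u" using h(1) pi_gt_zero by (intro mult_left_mono) auto
    have h2: "2*pi*d u \<le> 0" using h(2) pi_gt_zero by (simp add: mult_nonneg_nonpos)
    have "0 \<le> - (2*pi*d u)" "- (2*pi*d u) \<le> pi" using h1 h2 by linarith+
    then have "0 \<le> sin (- (2*pi*d u))" by (rule sin_ge_zero)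
    then show False using su by simp
  qed
  have "continuous_on {a..u} d" using c u by (auto intro: continuous_on_subset)
  then obtain x where x: "a \<le> x" "x \<le> u" "d x = -1/2"
    using IVT2'[of d u "-1/2" a] lt d0 u by auto
  then have "a < x" using d0 by (cases "a = x") auto
  then have "sin (2*pi*d x) > 0" by (rule s) (use x u in linarith)
  then show False using x by simp
qed

lemma ivt_r:
  fixes d :: "real \<Rightarrow> real"
  assumes c: "continuous_on {a..b} d" and d0: "d b = 0"
    and s: "\<And>u. a \<le> u \<Longrightarrow> u < b \<Longrightarrow> sin (2*pi*d u) > 0"
    and u: "a \<le> u" "u < b"
  shows "d u > 0"
proof (rule ccontr)
  assume nu: "\<not> d u > 0"
  have su: "sin (2*pi*d u) > 0" using s u .
  have lt: "d u < -1/2"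
  proof (rule ccontr)
    assume "\<not> d u < -1/2"
    then have h: "-1/2 \<le> d u" "d u \<le> 0" using nu by auto
    have h1: "2*pi*(-1/2) \<le> 2*pi*d u" using h(1) pi_gt_zero by (intro mult_left_mono) auto
    have h2: "2*pi*d u \<le> 0" using h(2) pi_gt_zero by (simp add: mult_nonneg_nonpos)
    have "0 \<le> - (2*pi*d u)" "- (2*pi*d u) \<le> pi" using h1 h2 by linarith+
    then have "0 \<le> sin (- (2*pi*d u))" by (rule sin_ge_zero)
    then show False using su by simp
  qed
  have "continuous_on {u..b} d" using c u by (auto intro: continuous_on_subset)
  then obtain x where x: "u \<le> x" "x \<le> b" "d x = -1/2"
    using IVT'[of d u "-1/2" b] lt d0 u by auto
  then have "x < b" using d0 by (cases "b = x") auto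
  then have "sin (2*pi*d x) > 0" by (intro s) (use x u in linarith)+
  then show False using x by simp
qed

lemma sin_circ: "sin (2*pi*(w - h)) = Im (circ_pt w * cnj (circ_pt h))"
  by (simp add: circ_pt_mult_cnj Im_circ_pt)

lemma cont_comp_UNIV: "continuous_on UNIV f \<Longrightarrow> continuous_on S g \<Longrightarrow> continuous_on S (\<lambda>x. f (g x))"
  using continuous_on_compose2[of UNIV f S g] by auto

context geo begin

lemma good_stP: "good p \<Longrightarrow> good (stP t p) \<and> ptof (stP t p) = sig P (ptof p)"
proof -
  assume g: "good p"
  obtain X Y where p: "p = (X, Y)" by (cases p) auto
  have y: "Y \<noteq> 0" and n: "norm (X / Y) = 1" using g p by (auto simp: good_def ptof_def)
  have e: "sig P (X / Y) = (\<i> * t * Y - X) / (Y + \<i> * t * X)"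
    using sig_proj[OF y, of P X] by (simp add: mult.assoc)
  have "Y - cnj P * X \<noteq> 0"
  proof -
    have "Y - cnj P * X = Y * (1 - cnj P * (X / Y))" using y by (simp add: field_simps)
    then show ?thesis using y sig_denom_nz[OF nP n] by simp
  qed
  then have dz: "Y + \<i> * t * X \<noteq> 0" by (simp add: mult.assoc)
  have "ptof (stP t p) = sig P (ptof p)" using e by (simp add: p stP_def ptof_def)
  moreover have "good (stP t p)"
    using dz calculation sig_norm[OF nP n] by (simp add: good_def p stP_def ptof_def)
  ultimately show ?thesis by simp
qed

lemma good_stQ: "good p \<Longrightarrow> good (stQ t p) \<and> ptof (stQ t p) = sig Q (ptof p)"
proof -
  assume g: "good p"
  obtain X Y where p: "p = (X, Y)" by (cases p) auto
  have y: "Y \<noteq> 0" and n: "norm (X / Y) = 1" using g p by (auto simp: good_def ptof_def)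
  have cQ: "cnj Q = \<i> * complex_of_real t" by simp
  have e: "sig Q (X / Y) = (Q * Y - X) / (Y - \<i> * complex_of_real t * X)"
    unfolding sig_proj[OF y] cQ ..
  have "Y - cnj Q * X \<noteq> 0"
  proof -
    have "Y - cnj Q * X = Y * (1 - cnj Q * (X / Y))" using y by (simp add: right_diff_distrib)
    then show ?thesis using y sig_denom_nz[OF nQ n] by simp
  qed
  then have dz: "Y - \<i> * complex_of_real t * X \<noteq> 0" unfolding cQ .
  have pt: "ptof (stQ t p) = sig Q (ptof p)"
  proof -
    have "ptof (stQ t p) = (Q * Y - X) / (Y - \<i> * complex_of_real t * X)"
      by (simp add: ptof_def p stQ_def)
    also have "\<dots> = sig Q (X / Y)" by (rule e[symmetric])
    finally show ?thesis by (simp add: ptof_def p)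
  qed
  moreover have "good (stQ t p)"
    unfolding good_def
  proof
    show "snd (stQ t p) \<noteq> 0" using dz by (simp add: stQ_def p)
    show "norm (ptof (stQ t p)) = 1" unfolding pt using sig_norm[OF nQ n] by (simp add: ptof_def p)
  qed
  ultimately show ?thesis by simp
qed

lemma good_stR: "good p \<Longrightarrow> good (stR t p) \<and> ptof (stR t p) = sig Rc (ptof p)"
proof -
  assume g: "good p"
  obtain X Y where p: "p = (X, Y)" by (cases p) auto
  have y: "Y \<noteq> 0" and n: "norm (X / Y) = 1" using g p by (auto simp: good_def ptof_def)
  have t1': "complex_of_real (t + 1) \<noteq> 0" using ttt(1) by (metis of_real_eq_0_iff)
  have e0: "sig Rc (X / Y) = (Rc * Y - X) / (Y - Rc * X)"
    using sig_proj[OF y, of Rc X] by simp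
  have nz: "Y - Rc * X \<noteq> 0"
  proof -
    have "Y - cnj Rc * X = Y * (1 - cnj Rc * (X / Y))" using y by (simp add: right_diff_distrib)
    then show ?thesis using y sig_denom_nz[OF nR n] by simp
  qed
  have r: "complex_of_real (t + 1) * Rc = complex_of_real (t - 1)"
  proof -
    have "(t + 1) * rcv t = t - 1" using ttt(1) by (simp add: rcv_def)
    then show ?thesis by (metis of_real_mult)
  qed
  have sR1: "complex_of_real (t + 1) * (Rc * Y - X) = complex_of_real (t - 1) * Y - complex_of_real (t + 1) * X"
    by (simp only: right_diff_distrib mult.assoc[symmetric] r)
  have sR2: "complex_of_real (t + 1) * (Y - Rc * X) = complex_of_real (t + 1) * Y - complex_of_real (t - 1) * X"
    by (simp only: right_diff_distrib mult.assoc[symmetric] r)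
  have sR: "stR t p = (complex_of_real (t + 1) * (Rc * Y - X), complex_of_real (t + 1) * (Y - Rc * X))"
    unfolding p stR_def sR1 sR2 by simp
  have pt: "ptof (stR t p) = sig Rc (ptof p)"
  proof -
    have "ptof (stR t p) = (complex_of_real (t + 1) * (Rc * Y - X)) / (complex_of_real (t + 1) * (Y - Rc * X))"
      unfolding ptof_def sR by simp
    also have "\<dots> = (Rc * Y - X) / (Y - Rc * X)" using t1' by (rule mult_divide_mult_cancel_left)
    also have "\<dots> = sig Rc (ptof p)" using e0 by (simp add: ptof_def p)
    finally show ?thesis .
  qed
  moreover have "good (stR t p)"
    unfolding good_def
  proof
    show "snd (stR t p) \<noteq> 0" unfolding sR using t1' nz by simp
    show "norm (ptof (stR t p)) = 1" unfolding pt using sig_norm[OF nR n] by (simp add: ptof_def p)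
  qed
  ultimately show ?thesis by simp
qed

end

lemma core_gen:
  assumes g1: "good p1" and g2: "good p2" and c1: "circ_pt w = ptof p1" and c2: "circ_pt h = ptof p2"
    and pos: "imc p1 p2 > 0"
  shows "sin (2*pi*(w - h)) > 0"
proof -
  have "snd p1 \<noteq> 0" "snd p2 \<noteq> 0" using g1 g2 by (auto simp: good_def)
  then have "(cmod (snd p1))\<^sup>2 * (cmod (snd p2))\<^sup>2 > 0" by simp
  then show ?thesis unfolding sin_circ c1 c2 imc_sign[OF g1 g2] using pos by simp
qed

lemma le_comp: "(\<And>x. f x \<le> g x) \<Longrightarrow> mono g \<Longrightarrow> u \<le> v \<Longrightarrow> f u \<le> g v"
  by (meson monoD order_trans)

context geo begin

lemma mGp: "strict_mono Gp" and mGq: "strict_mono Gq" and mGc: "strict_mono Gc"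
  using Gz_strict_mono nP nQ nR by auto

lemma contG: "continuous_on UNIV Gp" "continuous_on UNIV Gq" "continuous_on UNIV Gc"
  using Gz_cont nP nQ nR by auto

lemma GG: "Gp (Gp x) = x + 1" "Gq (Gq x) = x + 1" "Gc (Gc x) = x + 1"
  using Gz_Gz nP nQ nR by auto

lemma gX: "good (X0 u)" "good (stR t (X0 u))" "good (stP t (X0 u))" "good (stQ t (X0 u))"
  "good (stP t (stR t (X0 u)))" "good (stQ t (stR t (X0 u)))" "good (stR t (stQ t (X0 u)))"
  "good (stR t (stP t (X0 u)))" "good (stQ t (stR t (stP t (X0 u))))" "good (stP t (stR t (stP t (X0 u))))"
  "good (stP t (stQ t (stR t (X0 u))))"
  using good_X0 good_stP good_stQ good_stR by blast+

lemma cX: "circ_pt (Gp (Gc (yy u))) = ptof (stP t (stR t (X0 u)))"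
  "circ_pt (Gc (Gq (yy u))) = ptof (stR t (stQ t (X0 u)))"
  "circ_pt (Gq (Gc (Gp (yy u)))) = ptof (stQ t (stR t (stP t (X0 u))))"
  "circ_pt (Gp (Gc (Gp (yy u)))) = ptof (stP t (stR t (stP t (X0 u))))"
  "circ_pt (Gp (Gq (Gc (yy u)))) = ptof (stP t (stQ t (stR t (X0 u))))"
  using cG circ_yy gX good_stP good_stQ good_stR by auto

lemma cont_yyG:
  "continuous_on S (\<lambda>u. Gp (Gc (yy u)) - Gq (Gc (Gp (yy u))))"
  "continuous_on S (\<lambda>u. Gc (Gq (yy u)) - Gq (Gc (Gp (yy u))))"
  "continuous_on S (\<lambda>u. Gc (Gq (yy u)) - Gp (Gc (Gp (yy u))))"
  "continuous_on S (\<lambda>u. Gc (Gq (yy u)) - Gp (Gq (Gc (yy u))))"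
  by (intro continuous_on_diff cont_comp_UNIV[OF contG(1)] cont_comp_UNIV[OF contG(2)] cont_comp_UNIV[OF contG(3)] yy_cont)+

lemma tq: "0 < t" "0 < t + 1" "0 < 1 - t" "0 < (1 - t)\<^sup>2" using t1 t2 by auto

lemma core4a: assumes "-1 < u" "u \<le> -1/2" shows "Gq (Gc (Gp (yy u))) < Gp (Gc (yy u))"
proof -
  let ?d = "\<lambda>u. Gp (Gc (yy u)) - Gq (Gc (Gp (yy u)))"
  have s: "sin (2*pi*?d v) > 0" if v: "-1 < v" "v \<le> -1/2" for v
  proof (rule core_gen[OF gX(5) gX(9) cX(1) cX(3)])
    have q: "0 < qI4a v t" by (rule qI4a_pos) (use v t1 t2 in auto)
    have "imc (stP t (stR t (X0 v))) (stQ t (stR t (stP t (X0 v)))) = (v + 1) * ((1 - t)\<^sup>2 * (t * ((t + 1) * qI4a v t)))"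
      unfolding imc_I4a by (simp add: algebra_simps power2_eq_square)
    also have "\<dots> > 0" using v q tq by (intro mult_pos_pos) auto
    finally show "imc (stP t (stR t (X0 v))) (stQ t (stR t (stP t (X0 v)))) > 0" .
  qed
  have "?d u > 0"
  proof (rule ivt_l[of "-1" "-1/2" ?d])
    show "?d (-1) = 0" unfolding yy_vals(1) using Ea by simp
  qed (use cont_yyG(1) s assms in auto)
  then show ?thesis by simp
qed

lemma core4b: assumes "-1/2 \<le> u" "u < 0" shows "Gq (Gc (Gp (yy u))) < Gc (Gq (yy u))"
proof -
  let ?d = "\<lambda>u. Gc (Gq (yy u)) - Gq (Gc (Gp (yy u)))"
  have s: "sin (2*pi*?d v) > 0" if v: "-1/2 \<le> v" "v < 0" for v
  proof (rule core_gen[OF gX(7) gX(9) cX(2) cX(3)])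
    have q: "qI4b v t < 0" by (rule qI4b_pos) (use v t1 t2 in auto)
    have "imc (stR t (stQ t (X0 v))) (stQ t (stR t (stP t (X0 v)))) = (- v) * ((1 - t)\<^sup>2 * (t * ((t + 1) * (- qI4b v t))))"
      unfolding imc_I4b by (simp add: algebra_simps power2_eq_square)
    also have "\<dots> > 0" using v q tq by (intro mult_pos_pos) auto
    finally show "imc (stR t (stQ t (X0 v))) (stQ t (stR t (stP t (X0 v)))) > 0" .
  qed
  have "?d u > 0"
  proof (rule ivt_r[of "-1/2" 0 ?d])
    show "?d 0 = 0" unfolding yy_vals(2) using Eb1 by simp
  qed (use cont_yyG(2) s assms in auto)
  then show ?thesis by simp
qed

lemma core0a: assumes "0 < u" "u \<le> 1/2" shows "Gp (Gc (Gp (yy u))) < Gc (Gq (yy u))"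
proof -
  let ?d = "\<lambda>u. Gc (Gq (yy u)) - Gp (Gc (Gp (yy u)))"
  have s: "sin (2*pi*?d v) > 0" if v: "0 < v" "v \<le> 1/2" for v
  proof (rule core_gen[OF gX(7) gX(10) cX(2) cX(4)])
    have q: "qI0a v t < 0" by (rule qI0a_pos) (use v t1 t2 in auto)
    have "imc (stR t (stQ t (X0 v))) (stP t (stR t (stP t (X0 v)))) = v * ((1 - t) * (t * ((t + 1) * ((t + 1) * (- qI0a v t)))))"
      unfolding imc_I0a by (simp add: algebra_simps power2_eq_square)
    also have "\<dots> > 0" using v q tq by (intro mult_pos_pos) auto
    finally show "imc (stR t (stQ t (X0 v))) (stP t (stR t (stP t (X0 v)))) > 0" .
  qed
  have "?d u > 0"
  proof (rule ivt_l[of 0 "1/2" ?d])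
    show "?d 0 = 0" unfolding yy_vals(2) using Eb2 by simp
  qed (use cont_yyG(3) s assms in auto)
  then show ?thesis by simp
qed

lemma core0b: assumes "1/2 \<le> u" "u < 1" shows "Gp (Gq (Gc (yy u))) < Gc (Gq (yy u))"
proof -
  let ?d = "\<lambda>u. Gc (Gq (yy u)) - Gp (Gq (Gc (yy u)))"
  have s: "sin (2*pi*?d v) > 0" if v: "1/2 \<le> v" "v < 1" for v
  proof (rule core_gen[OF gX(7) gX(11) cX(2) cX(5)])
    have q: "0 < qI0b v t" by (rule qI0b_pos) (use v t1 t2 in auto)
    have "imc (stR t (stQ t (X0 v))) (stP t (stQ t (stR t (X0 v)))) = (1 - v) * ((1 - t) * (t * ((t + 1) * qI0b v t)))"
      unfolding imc_I0b by (simp add: algebra_simps power2_eq_square)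
    also have "\<dots> > 0" using v q tq by (intro mult_pos_pos) auto
    finally show "imc (stR t (stQ t (X0 v))) (stP t (stQ t (stR t (X0 v)))) > 0" .
  qed
  have "?d u > 0"
  proof (rule ivt_r[of "1/2" 1 ?d])
    show "?d 1 = 0" unfolding yy_vals(3) using Ec by simp
  qed (use cont_yyG(4) s assms in auto)
  then show ?thesis by simp
qed

end

lemma funpow_strict_mono: "strict_mono (f :: real \<Rightarrow> real) \<Longrightarrow> strict_mono (f ^^ n)"
  by (induction n) (auto simp: strict_mono_def)

lemma funpow_le_pointwise:
  fixes f g :: "real \<Rightarrow> real"
  assumes "\<And>x. f x \<le> g x" "mono g" shows "(f ^^ n) x \<le> (g ^^ n) x"
proof (induction n)
  case 0 then show ?case by simp
next
  case (Suc n)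
  have "f ((f ^^ n) x) \<le> g ((f ^^ n) x)" by (rule assms(1))
  also have "\<dots> \<le> g ((g ^^ n) x)" using Suc assms(2) by (auto dest: monoD)
  finally show ?case by simp
qed

lemma funpow_comm: "(f ^^ a) ((f ^^ b) x) = (f ^^ b) ((f ^^ a) x)"
  by (metis funpow_add add.commute comp_apply)

lemma strict_mono_less_iff: "strict_mono (f :: real \<Rightarrow> real) \<Longrightarrow> f x < f y \<longleftrightarrow> x < y"
  by (simp add: strict_mono_less)
lemma strict_mono_le_iff: "strict_mono (f :: real \<Rightarrow> real) \<Longrightarrow> f x \<le> f y \<longleftrightarrow> x \<le> y"
  by (simp add: strict_mono_less_eq)

lemma F3_periodic_int: "F3 a b c (x + real_of_int k) = F3 a b c x + real_of_int k"
  unfolding F3_def using Gz_periodic[where k="real_of_int k"] by (simp add: min_add_distrib_right)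

lemma liftmap_F3: "norm a < 1 \<Longrightarrow> norm b < 1 \<Longrightarrow> norm c < 1 \<Longrightarrow> liftmap (F3 a b c)"
  by (unfold_locales) (auto simp: F3_periodic1 strict_mono_mono F3_strict_mono)

lemma close2:
  fixes g1 g2 :: "real \<Rightarrow> real"
  assumes m1: "strict_mono g1" and m2: "strict_mono g2"
    and i1: "\<And>x. g1 (g1 x) = x + 1" and i2: "\<And>x. g2 (g2 x) = x + 1"
    and p1: "\<And>x. g1 (x + 1) = g1 x + 1"
  shows "Z \<le> g2 (g1 y) \<Longrightarrow> g1 (g2 Z) \<le> y + 2" "Z < g2 (g1 y) \<Longrightarrow> g1 (g2 Z) < y + 2"
proof -
  have e: "g1 (g2 (g2 (g1 y))) = y + 2" using i1 i2 p1 by simp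
  show "Z \<le> g2 (g1 y) \<Longrightarrow> g1 (g2 Z) \<le> y + 2"
    using e m1 m2 by (metis strict_mono_le_iff)
  show "Z < g2 (g1 y) \<Longrightarrow> g1 (g2 Z) < y + 2"
    using e m1 m2 by (metis strict_mono_less_iff)
qed

context geo begin

lemma Fc_le: "Fc x \<le> Gp x" "Fc x \<le> Gq x" "Fc x \<le> Gc x"
  by (auto simp: F3_def)

lemma mFc: "strict_mono Fc" using F3_strict_mono nP nQ nR by blast

lemma LFc: "liftmap Fc" using liftmap_F3 nP nQ nR by blast

lemma Fc5_expand: "(Fc ^^ 5) y = Fc (Fc (Fc (Fc (Fc y))))"
  by (simp add: numeral_eq_Suc)

lemma Fc5_word:
  assumes "\<And>x. Fc x \<le> ga x" "\<And>x. Fc x \<le> gb x" "\<And>x. Fc x \<le> gc x" "\<And>x. Fc x \<le> gd x" "\<And>x. Fc x \<le> ge x"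
    and "mono ga" "mono gb" "mono gc" "mono gd"
  shows "(Fc ^^ 5) y \<le> ga (gb (gc (gd (ge y))))"
  unfolding Fc5_expand
  by (rule le_comp[OF assms(1) assms(6)], rule le_comp[OF assms(2) assms(7)],
      rule le_comp[OF assms(3) assms(8)], rule le_comp[OF assms(4) assms(9)], rule assms(5))

lemmas monoG = strict_mono_mono[OF mGp] strict_mono_mono[OF mGq] strict_mono_mono[OF mGc]
lemmas perG = Gz_periodic1[of P] Gz_periodic1[of Q] Gz_periodic1[of Rc]

lemma Fc5_D:
  assumes y: "3/4 \<le> y" "y \<le> 5/4"
  shows "(Fc ^^ 5) y \<le> y + 2" "(Fc ^^ 5) y < y + 2 \<or> y = 3/4 \<or> y = 1 \<or> y = 5/4"
proof -
  define u where "u = tan (pi * (y - 1))"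
  have r: "- (pi/2) < pi * (y - 1)" "pi * (y - 1) < pi/2" using y pi_gt_zero by (auto simp: field_simps)
  have au: "arctan u = pi * (y - 1)" unfolding u_def using arctan_tan r by blast
  have yu: "yy u = y" unfolding yy_def au by simp
  have r2: "- (pi/4) \<le> arctan u" "arctan u \<le> pi/4" unfolding au using y pi_gt_zero by (auto simp: field_simps)
  have ub: "-1 \<le> u" "u \<le> 1"
  proof -
    have "arctan (-1) \<le> arctan u" using r2 by (simp add: arctan_minus arctan_one)
    then show "-1 \<le> u" by (simp only: arctan_le_iff)
    have "arctan u \<le> arctan 1" using r2 by (simp add: arctan_one)
    then show "u \<le> 1" by (simp only: arctan_le_iff)
  qed
  have um1: "u = -1 \<Longrightarrow> y = 3/4" using yu yy_vals by auto
  have u0: "u = 0 \<Longrightarrow> y = 1" using yu yy_vals by auto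
  have u1: "u = 1 \<Longrightarrow> y = 5/4" using yu yy_vals by auto
  note cl_c = close2[OF mGc mGp GG(3) GG(1) perG(3)]
  note cl_q = close2[OF mGq mGc GG(2) GG(3) perG(2)]
  have res: "(Fc ^^ 5) y \<le> y + 2 \<and> ((Fc ^^ 5) y < y + 2 \<or> y = 3/4 \<or> y = 1 \<or> y = 5/4)"
  proof (cases "u \<le> -1/2")
    case True
    have W: "(Fc ^^ 5) y \<le> Gc (Gp (Gq (Gc (Gp y))))"
        by (rule Fc5_word[where ga=Gc and gb=Gp and gc=Gq and gd=Gc and ge=Gp]) (rule Fc_le monoG)+
    show ?thesis
    proof (cases "u = -1")
      case True
      have yv: "y = 3/4" by (rule um1[OF True])
      have "Gq (Gc (Gp y)) = Gp (Gc y)" unfolding yv by (rule Ea)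
      then have "Gc (Gp (Gq (Gc (Gp y)))) \<le> y + 2" using cl_c(1)[of "Gq (Gc (Gp y))" y] by simp
      then have "(Fc ^^ 5) y \<le> y + 2" using W by linarith
      then show ?thesis using yv by blast
    next
      case False
      then have "Gq (Gc (Gp (yy u))) < Gp (Gc (yy u))" using core4a ub \<open>u \<le> -1/2\<close> by simp
      then have "Gc (Gp (Gq (Gc (Gp y)))) < y + 2" using cl_c(2)[of "Gq (Gc (Gp y))" y] yu by simp
      then show ?thesis using W by simp
    qed
  next
    case F1: False
    show ?thesis
    proof (cases "u \<le> 0")
      case True
      have W: "(Fc ^^ 5) y \<le> Gq (Gc (Gq (Gc (Gp y))))"
        by (rule Fc5_word[where ga=Gq and gb=Gc and gc=Gq and gd=Gc and ge=Gp]) (rule Fc_le monoG)+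
      show ?thesis
      proof (cases "u = 0")
        case True
        have yv: "y = 1" by (rule u0[OF True])
        have "Gq (Gc (Gp y)) = Gc (Gq y)" unfolding yv by (rule Eb1)
        then have "Gq (Gc (Gq (Gc (Gp y)))) \<le> y + 2" using cl_q(1)[of "Gq (Gc (Gp y))" y] by simp
        then have "(Fc ^^ 5) y \<le> y + 2" using W by linarith
        then show ?thesis using yv by blast
      next
        case False
        then have "Gq (Gc (Gp (yy u))) < Gc (Gq (yy u))" using core4b F1 \<open>u \<le> 0\<close> by simp
        then have "Gq (Gc (Gq (Gc (Gp y)))) < y + 2" using cl_q(2)[of "Gq (Gc (Gp y))" y] yu by simp
        then show ?thesis using W by simp
      qed
    next
      case F2: False
      show ?thesis
      proof (cases "u \<le> 1/2")
        case True
        have W: "(Fc ^^ 5) y \<le> Gq (Gc (Gp (Gc (Gp y))))"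
        by (rule Fc5_word[where ga=Gq and gb=Gc and gc=Gp and gd=Gc and ge=Gp]) (rule Fc_le monoG)+
        have "Gp (Gc (Gp (yy u))) < Gc (Gq (yy u))" using core0a F2 True by simp
        then have "Gq (Gc (Gp (Gc (Gp y)))) < y + 2" using cl_q(2)[of "Gp (Gc (Gp y))" y] yu by simp
        then show ?thesis using W by simp
      next
        case F3: False
        have W: "(Fc ^^ 5) y \<le> Gq (Gc (Gp (Gq (Gc y))))"
        by (rule Fc5_word[where ga=Gq and gb=Gc and gc=Gp and gd=Gq and ge=Gc]) (rule Fc_le monoG)+
        show ?thesis
        proof (cases "u = 1")
          case True
          have yv: "y = 5/4" by (rule u1[OF True])
          have "Gp (Gq (Gc y)) = Gc (Gq y)" unfolding yv by (rule Ec)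
          then have "Gq (Gc (Gp (Gq (Gc y)))) \<le> y + 2" using cl_q(1)[of "Gp (Gq (Gc y))" y] by simp
          then have "(Fc ^^ 5) y \<le> y + 2" using W by linarith
          then show ?thesis using yv by blast
        next
          case False
          then have "Gp (Gq (Gc (yy u))) < Gc (Gq (yy u))" using core0b F3 ub by simp
          then have "Gq (Gc (Gp (Gq (Gc y)))) < y + 2" using cl_q(2)[of "Gp (Gq (Gc y))" y] yu by simp
          then show ?thesis using W by simp
        qed
      qed
    qed
  qed
  then show "(Fc ^^ 5) y \<le> y + 2" "(Fc ^^ 5) y < y + 2 \<or> y = 3/4 \<or> y = 1 \<or> y = 5/4" by auto
qed

end

context geo begin

lemma Fc_iter_int: "(Fc ^^ n) (x + real_of_int k) = (Fc ^^ n) x + real_of_int k"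
  using liftmap.iter_per_int[OF LFc] by blast

lemma Fc_int: "Fc (x + real_of_int k) = Fc x + real_of_int k"
  by (rule F3_periodic_int)

lemma enter: "\<exists>j\<le>2. \<exists>m::int. 3/4 \<le> (Fc ^^ j) x - m \<and> (Fc ^^ j) x - m \<le> 5/4"
proof -
  define m0 where "m0 = \<lfloor>x - 3/4\<rfloor>"
  define x' where "x' = x - real_of_int m0"
  have fl: "real_of_int m0 \<le> x - 3/4" "x - 3/4 < real_of_int m0 + 1"
    unfolding m0_def by (rule of_int_floor_le, rule real_of_int_floor_add_one_gt)
  have xr: "3/4 \<le> x'" "x' < 7/4" using fl unfolding x'_def by linarith+
  have xx: "x = x' + real_of_int m0" by (simp add: x'_def)
  have it: "(Fc ^^ j) x = (Fc ^^ j) x' + real_of_int m0" for j unfolding xx by (rule Fc_iter_int)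
  show ?thesis
  proof (cases "x' \<le> 5/4")
    case True
    then show ?thesis using xr it[of 0] by (intro exI[of _ 0] conjI exI[of _ m0]) auto
  next
    case False
    then have x54: "5/4 < x'" by simp
    have a1: "Fc x' < 9/4" using strict_monoD[OF mFc xr(2)] Fc74 by simp
    have a0: "Fc (5/4) < Fc x'" using strict_monoD[OF mFc x54] .
    show ?thesis
    proof (cases "7/4 \<le> Fc x'")
      case True
      have "3/4 \<le> (Fc ^^ 1) x - real_of_int (m0 + 1)" "(Fc ^^ 1) x - real_of_int (m0 + 1) \<le> 5/4"
        using it[of 1] True a1 by auto
      then show ?thesis by (intro exI[of _ 1] conjI exI[of _ "m0 + 1"]) auto
    next
      case False
      have b1: "Fc (Fc x') < 9/4" using strict_monoD[OF mFc, of "Fc x'" "7/4"] False Fc74 by simp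
      have b0: "2 < Fc (Fc x')" using strict_monoD[OF mFc a0] Fc2_54 by simp
      have "(Fc ^^ 2) x = Fc (Fc x') + real_of_int m0" using it[of 2] by (simp add: numeral_eq_Suc)
      then have "3/4 \<le> (Fc ^^ 2) x - real_of_int (m0 + 1)" "(Fc ^^ 2) x - real_of_int (m0 + 1) \<le> 5/4"
        using b0 b1 by auto
      then show ?thesis by (intro exI[of _ 2] conjI exI[of _ "m0 + 1"]) auto
    qed
  qed
qed

lemma Fc5_shift: "(Fc ^^ 5) ((Fc ^^ j) x) = (Fc ^^ j) ((Fc ^^ 5) x)"
  by (rule funpow_comm)

lemma Fc5_le: "(Fc ^^ 5) x \<le> x + 2"
proof -
  obtain j and m :: int where jm: "j \<le> 2" "3/4 \<le> (Fc ^^ j) x - m" "(Fc ^^ j) x - m \<le> 5/4"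
    using enter by blast
  define y where "y = (Fc ^^ j) x - m"
  have zy: "(Fc ^^ j) x = y + m" by (simp add: y_def)
  have "(Fc ^^ 5) y \<le> y + 2" using Fc5_D(1) jm unfolding y_def by blast
  then have "(Fc ^^ 5) ((Fc ^^ j) x) \<le> (Fc ^^ j) x + 2" unfolding zy Fc_iter_int by simp
  also have "(Fc ^^ j) x + 2 = (Fc ^^ j) (x + 2)" using Fc_iter_int[of j x 2] by simp
  finally have "(Fc ^^ j) ((Fc ^^ 5) x) \<le> (Fc ^^ j) (x + 2)" unfolding Fc5_shift .
  then show ?thesis using strict_mono_le_iff[OF funpow_strict_mono[OF mFc]] by blast
qed

lemma Fc_tight:
  assumes "(Fc ^^ 5) x \<ge> x + 2"
  shows "\<exists>j\<le>2. \<exists>m::int. (Fc ^^ j) x - m = 3/4 \<or> (Fc ^^ j) x - m = 1 \<or> (Fc ^^ j) x - m = 5/4"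
proof -
  obtain j and m :: int where jm: "j \<le> 2" "3/4 \<le> (Fc ^^ j) x - m" "(Fc ^^ j) x - m \<le> 5/4"
    using enter by blast
  define y where "y = (Fc ^^ j) x - m"
  have zy: "(Fc ^^ j) x = y + m" by (simp add: y_def)
  have "(Fc ^^ j) (x + 2) \<le> (Fc ^^ j) ((Fc ^^ 5) x)"
    using assms strict_mono_le_iff[OF funpow_strict_mono[OF mFc]] by blast
  then have "(Fc ^^ j) x + 2 \<le> (Fc ^^ 5) ((Fc ^^ j) x)"
    unfolding Fc5_shift using Fc_iter_int[of j x 2] by simp
  then have "y + 2 \<le> (Fc ^^ 5) y" unfolding zy Fc_iter_int by simp
  then have "\<not> (Fc ^^ 5) y < y + 2" by simp
  then have "y = 3/4 \<or> y = 1 \<or> y = 5/4" using Fc5_D(2) jm unfolding y_def by blast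
  then show ?thesis using jm(1) unfolding y_def by blast
qed

end

locale geo2 = geo +
  fixes r' :: real
  assumes r1: "-1 < r'" and r2: "r' < rcv t"
begin

abbreviation "Rr \<equiv> complex_of_real r'"
abbreviation "Fr \<equiv> F3 P Q Rr"
abbreviation "Gr \<equiv> Gz Rr"

lemma rneg: "r' < 0" using r2 rc_neg by linarith
lemma nRr: "norm Rr < 1" using r1 rneg by simp

lemma mFr: "strict_mono Fr" using F3_strict_mono nP nQ nRr by blast
lemma LFr: "liftmap Fr" using liftmap_F3 nP nQ nRr by blast

lemma Fr_iter_int: "(Fr ^^ n) (x + real_of_int k) = (Fr ^^ n) x + real_of_int k"
  using liftmap.iter_per_int[OF LFr] by blast

lemma Fr_le_Fc: "Fr x \<le> Fc x"
proof -
  define m where "m = min (qq P x) (min (qq Q x) (qq Rr x))"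
  define \<alpha> where "\<alpha> = rc / r'"
  define \<beta> where "\<beta> = (1 - \<alpha>) / 2"
  have al: "0 < \<alpha>" "\<alpha> < 1" unfolding \<alpha>_def using rc_neg rneg r2 by (auto simp: field_simps)
  have sum: "\<alpha> + \<beta> + \<beta> = 1" unfolding \<beta>_def by simp
  have Rc_comb: "Rc = complex_of_real \<alpha> * Rr + complex_of_real \<beta> * P + complex_of_real \<beta> * Q"
  proof -
    have "\<alpha> * r' = rc" unfolding \<alpha>_def using rneg by simp
    then have "complex_of_real \<alpha> * Rr = Rc" by (metis of_real_mult)
    then show ?thesis by (simp add: algebra_simps)
  qed
  have uc: "uu Rc x = complex_of_real \<alpha> * uu Rr x + complex_of_real \<beta> * uu P x + complex_of_real \<beta> * uu Q x"
    unfolding uu_def Rc_comb by (rule uu_comb[OF sum])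
  have ReI: "Re (uu Rc x) = \<alpha> * Re (uu Rr x) + \<beta> * Re (uu P x) + \<beta> * Re (uu Q x)"
    "Im (uu Rc x) = \<alpha> * Im (uu Rr x) + \<beta> * Im (uu P x) + \<beta> * Im (uu Q x)"
    unfolding uc by simp_all
  have b0: "0 \<le> \<beta>" using al unfolding \<beta>_def by simp
  have ge: "Im (uu z x) \<ge> m * Re (uu z x)" if "z = P \<or> z = Q \<or> z = Rr" for z
  proof -
    have nz: "norm z < 1" using that nP nQ nRr by auto
    have "m \<le> qq z x" using that by (auto simp: m_def)
    then have "m * Re (uu z x) \<le> qq z x * Re (uu z x)" using Re_uu_pos[OF nz, of x] by (intro mult_right_mono) auto
    also have "\<dots> = Im (uu z x)" using Im_uu[OF nz] by simp
    finally show ?thesis .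
  qed
  have "m * Re (uu Rc x) \<le> Im (uu Rc x)"
  proof -
    have "m * Re (uu Rc x) = \<alpha> * (m * Re (uu Rr x)) + \<beta> * (m * Re (uu P x)) + \<beta> * (m * Re (uu Q x))"
      unfolding ReI by (simp add: algebra_simps)
    also have "\<dots> \<le> \<alpha> * Im (uu Rr x) + \<beta> * Im (uu P x) + \<beta> * Im (uu Q x)"
      using ge[of Rr] ge[of P] ge[of Q] al b0
      by (intro add_mono mult_left_mono) auto
    finally show ?thesis unfolding ReI .
  qed
  then have "m \<le> qq Rc x" unfolding qq_def using Re_uu_pos[OF nR, of x] by (simp add: le_divide_eq)
  then have "Fr x \<le> Gc x" unfolding F3_alt Gz_def m_def[symmetric]
    using pi_gt_zero by (simp add: divide_right_mono arctan_monotone')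
  then show ?thesis using Fc_le[of x] by (simp add: F3_def)
qed

lemma Fr54: "Fr (5/4) < Fc (5/4)"
proof -
  have "qv Rr \<i> = r'" by (simp add: qv_def)
  then have "Gr (5/4) < Gc (5/4)"
    unfolding Gz_qv circ_54 using qv_i(3) r2 pi_gt_zero by (simp add: divide_strict_right_mono arctan_monotone)
  moreover have "Fr (5/4) \<le> Gr (5/4)" by (simp add: F3_def)
  ultimately show ?thesis using Fc54 by simp
qed

lemma Fr54_int: "Fr (5/4 + real_of_int m) < Fc (5/4 + real_of_int m)"
  using Fr54 F3_periodic_int[of P Q Rr "5/4" m] F3_periodic_int[of P Q Rc "5/4" m] by simp

lemma Fr_iter_le: "(Fr ^^ n) x \<le> (Fc ^^ n) x"
  by (rule funpow_le_pointwise[OF Fr_le_Fc strict_mono_mono[OF mFc]])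

lemma chain:
  assumes "(Fr ^^ 5) z \<ge> z + 2" and "i \<le> 5"
  shows "(Fr ^^ i) z = (Fc ^^ i) z"
proof -
  have e: "(Fr ^^ 5) z = (Fr ^^ (5 - i)) ((Fr ^^ i) z)" using assms(2)
    by (metis funpow_add le_add_diff_inverse2 comp_apply)
  have e2: "(Fc ^^ 5) z = (Fc ^^ (5 - i)) ((Fc ^^ i) z)" using assms(2)
    by (metis funpow_add le_add_diff_inverse2 comp_apply)
  have "(Fr ^^ (5 - i)) ((Fr ^^ i) z) \<le> (Fc ^^ (5 - i)) ((Fr ^^ i) z)" by (rule Fr_iter_le)
  moreover have "(Fc ^^ (5 - i)) ((Fr ^^ i) z) \<le> (Fc ^^ (5 - i)) ((Fc ^^ i) z)"
    using Fr_iter_le strict_mono_le_iff[OF funpow_strict_mono[OF mFc]] by blast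
  moreover have "(Fc ^^ 5) z \<le> z + 2" by (rule Fc5_le)
  ultimately have "(Fc ^^ (5 - i)) ((Fr ^^ i) z) = (Fc ^^ (5 - i)) ((Fc ^^ i) z)"
    using e e2 assms(1) by linarith
  then show ?thesis using strict_mono_eq[OF funpow_strict_mono[OF mFc]] by blast
qed

lemma chain_step:
  assumes "(Fr ^^ 5) z \<ge> z + 2" and "i \<le> 4"
  shows "Fr ((Fr ^^ i) z) = Fc ((Fr ^^ i) z)"
proof -
  have a: "(Fr ^^ Suc i) z = (Fc ^^ Suc i) z" by (rule chain[OF assms(1)]) (use assms(2) in simp)
  have b: "(Fr ^^ i) z = (Fc ^^ i) z" by (rule chain[OF assms(1)]) (use assms(2) in simp)
  have "Fr ((Fr ^^ i) z) = (Fr ^^ Suc i) z" by simp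
  also have "\<dots> = (Fc ^^ Suc i) z" by (rule a)
  also have "\<dots> = Fc ((Fc ^^ i) z)" by simp
  also have "\<dots> = Fc ((Fr ^^ i) z)" by (simp only: b)
  finally show ?thesis .
qed

lemma Fr5_lt: "(Fr ^^ 5) x < x + 2"
proof (rule ccontr)
  assume "\<not> (Fr ^^ 5) x < x + 2"
  then have tx: "(Fr ^^ 5) x \<ge> x + 2" by simp
  then have "(Fc ^^ 5) x \<ge> x + 2" using Fr_iter_le[of 5 x] by linarith
  then obtain j and m :: int where jm: "j \<le> 2"
    "(Fc ^^ j) x - m = 3/4 \<or> (Fc ^^ j) x - m = 1 \<or> (Fc ^^ j) x - m = 5/4"
    using Fc_tight by blast
  define z where "z = (Fr ^^ j) x"
  have zc: "z = (Fc ^^ j) x" unfolding z_def using chain[OF tx] jm(1) by simp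
  have tz: "(Fr ^^ 5) z \<ge> z + 2"
  proof -
    have "(Fr ^^ j) (x + 2) \<le> (Fr ^^ j) ((Fr ^^ 5) x)"
      using tx strict_mono_le_iff[OF funpow_strict_mono[OF mFr]] by blast
    then show ?thesis unfolding z_def funpow_comm[where f=Fr and a=5 and b=j] using Fr_iter_int[of j x 2] by simp
  qed
  note cs = chain_step[OF tz]
  note ch = chain[OF tz]
  have "False" if "z = 5/4 + real_of_int m"
    using cs[of 0] Fr54_int[of m] that by simp
  moreover have "False" if "z = 3/4 + real_of_int m"
  proof -
    have "Fc z = 5/4 + real_of_int m" using that Fc_int[of "3/4" m] Fc34 by simp
    then have "(Fr ^^ 1) z = 5/4 + real_of_int m" using ch[of 1] by simp
    then show False using cs[of 1] Fr54_int[of m] by simp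
  qed
  moreover have "False" if "z = 1 + real_of_int m"
  proof -
    have "(Fc ^^ 3) z = (Fc ^^ 3) 1 + real_of_int m" unfolding that by (rule Fc_iter_int)
    also have "(Fc ^^ 3) 1 = 9/4" using Fc3_1 by (simp add: numeral_eq_Suc)
    finally have "(Fr ^^ 3) z = 5/4 + real_of_int (m + 1)" using ch[of 3] by simp
    then show False using cs[of 3] Fr54_int[of "m + 1"] by simp
  qed
  ultimately show False using jm(2) zc by (auto simp: algebra_simps)
qed

lemma Fr_cont: "continuous_on UNIV Fr" using F3_cont nP nQ nRr by blast

lemma Fr_iter_cont: "continuous_on UNIV (Fr ^^ n)"
proof (induction n)
  case 0 then show ?case by (simp add: continuous_on_id)
next
  case (Suc n)
  have "continuous_on UNIV (Fr \<circ> (Fr ^^ n))"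
    by (rule continuous_on_compose[OF Suc]) (use Fr_cont in \<open>auto intro: continuous_on_subset\<close>)
  then show ?case by simp
qed

lemma eps: "\<exists>M < 0. \<forall>x. (Fr ^^ 5) x \<le> x + 2 + M"
proof -
  define h where "h x = (Fr ^^ 5) x - x - 2" for x
  have hc: "continuous_on {0..1} h" unfolding h_def[abs_def]
    using Fr_iter_cont[of 5] by (intro continuous_intros) (auto intro: continuous_on_subset)
  obtain x0 where x0: "x0 \<in> {0..1}" "\<forall>y\<in>{0..1}. h y \<le> h x0"
    using continuous_attains_sup[OF compact_Icc _ hc] by auto
  have neg: "h x0 < 0" using Fr5_lt[of x0] by (simp add: h_def)
  have "h x \<le> h x0" for x
  proof -
    define k where "k = \<lfloor>x\<rfloor>"
    define x' where "x' = x - real_of_int k"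
    have "0 \<le> x'" "x' \<le> 1" unfolding x'_def k_def
      using of_int_floor_le[of x] real_of_int_floor_add_one_gt[of x] by linarith+
    then have "h x' \<le> h x0" using x0 by auto
    moreover have "h x = h x'" unfolding h_def x'_def using Fr_iter_int[of 5 "x - real_of_int k" k] by simp
    ultimately show ?thesis by simp
  qed
  then have "\<forall>x. (Fr ^^ 5) x \<le> x + 2 + h x0"
  proof (intro allI)
    fix x assume hh: "\<And>x. h x \<le> h x0"
    show "(Fr ^^ 5) x \<le> x + 2 + h x0" using hh[of x] unfolding h_def by linarith
  qed
  then show ?thesis using neg by blast
qed

theorem main: "rot_num (psi (convex hull {P, Q, Rr})) < 2 / 5"
proof -
  have lift: "circle_lift (psi (convex hull {P, Q, Rr})) = Fr" by (rule lift_F3[OF nP nQ nRr])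
  obtain \<rho> where r: "\<forall>x. (\<lambda>n. ((Fr ^^ n) x - x) / real n) \<longlonglongrightarrow> \<rho>"
    using liftmap.rot_exists[OF LFr] by blast
  have rn: "rot_num (psi (convex hull {P, Q, Rr})) = \<rho>"
    by (rule rot_num_eq) (use r lift in simp)
  obtain M where M: "M < 0" "\<forall>x. (Fr ^^ 5) x \<le> x + (2 + M)" using eps by (auto simp: add.assoc)
  have "\<rho> \<le> (2 + M) / real 5"
    by (rule liftmap.rot_bound[OF LFr r]) (use M in auto)
  then show ?thesis using rn M by simp
qed

end

theorem lemma6p16:
  fixes t r' :: real
  assumes "0.8 < t" and "t < 1"
    and "-1 < r'" and "r' < (t - 1) / (t + 1)"
  shows "rot_num (psi (convex hull {\<i> * complex_of_real t, - \<i> * complex_of_real t,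
                                    complex_of_real r'})) < 2 / 5"
proof -
  interpret geo2 t r'
    by unfold_locales (use assms in \<open>auto simp: rcv_def\<close>)
  show ?thesis by (rule main)
qed

end
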